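(* Let $(X,\Sigma,\mu)$ be a semi-finite measure space, and let $E$ be the ideal in $\mathrm{L}^0(X,\Sigma,\mu)$ consisting of (equivalence classes of) measurable functions with $\sigma$-finite supports. Then $E$ admits a uo-Lebesgue topology, which is the topology of local convergence in measure, and $E$ has the countable sup property. Consequently: (1) every net in $E$ that converges locally in measure has an embedded sequence that converges almost everywhere as well as locally in measure to the same limit; (2) a sequence in $E$ converges locally in measure to $f\in E$ if and only if every subsequence has a further subsequence that converges almost everywhere to $f$.
   Context: $\mathrm{L}^0(X,\Sigma,\mu)$ is the vector lattice of measurable real functions modulo $\mu$-a.e. equality. A measure space is semi-finite if every set of infinite measure contains a measurable subset of finite positive measure. A net $(f_\alpha)$ converges locally in measure to $f$ if $\mu(\{t\in B: |f_\alpha(t)-f(t)|\geq\varepsilon\})\to0$ for every $\varepsilon>0$ and every $B\in\Sigma$ with $\mu(B)<\infty$. A uo-Lebesgue topology on a vector lattice is a Hausdorff linear topology with a zero neighbourhood basis of solid sets in which every uo-convergent net converges to the same limit (uo-convergence: $|x_\alpha-x|\wedge|y|\to0$ in order for all $y$; order convergence: there is a net $y_\beta\downarrow0$ such that for each $\beta_0$ eventually $|x_\alpha-x|\leq y_{\beta_0}$). Countable sup property: every subset with a supremum contains an at most countable subset with the same supremum. Embedded sequence: given a net $(x_\alpha)_{\alpha\in A}$, a sequence $(x_{\alpha_n})$ with $\alpha_1\leq\alpha_2\leq\dotsb$, strictly increasing when $A$ has no largest element. *)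

theory Defs
  imports "HOL-Analysis.Analysis"
begin

text \<open>Elements of L0 are represented by measurable real functions; the lattice
  operations are pointwise and equality/order are taken almost everywhere.\<close>

definition semifinite :: "'a measure \<Rightarrow> bool" where
  "semifinite M \<longleftrightarrow> (\<forall>A\<in>sets M. emeasure M A = \<infinity> \<longrightarrow>
     (\<exists>B\<in>sets M. B \<subseteq> A \<and> 0 < emeasure M B \<and> emeasure M B < \<infinity>))"

definition sigma_finite_support :: "'a measure \<Rightarrow> ('a \<Rightarrow> real) \<Rightarrow> bool" where
  "sigma_finite_support M f \<longleftrightarrow> (\<exists>A :: nat \<Rightarrow> 'a set.
     (\<forall>n. A n \<in> sets M \<and> emeasure M (A n) < \<infinity>) \<and>
     (AE t in M. f t \<noteq> 0 \<longrightarrow> t \<in> (\<Union>n. A n)))"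

definition Esp :: "'a measure \<Rightarrow> ('a \<Rightarrow> real) set" where
  "Esp M = {f \<in> borel_measurable M. sigma_finite_support M f}"

definition aeq :: "'a measure \<Rightarrow> ('a \<Rightarrow> real) \<Rightarrow> ('a \<Rightarrow> real) \<Rightarrow> bool" where
  "aeq M f g \<longleftrightarrow> (AE t in M. f t = g t)"

definition ale :: "'a measure \<Rightarrow> ('a \<Rightarrow> real) \<Rightarrow> ('a \<Rightarrow> real) \<Rightarrow> bool" where
  "ale M f g \<longleftrightarrow> (AE t in M. f t \<le> g t)"

definition directed_set :: "'i set \<Rightarrow> ('i \<Rightarrow> 'i \<Rightarrow> bool) \<Rightarrow> bool" where
  "directed_set A le \<longleftrightarrow> A \<noteq> {} \<and> (\<forall>a\<in>A. le a a) \<and>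
     (\<forall>a\<in>A. \<forall>b\<in>A. \<forall>c\<in>A. le a b \<longrightarrow> le b c \<longrightarrow> le a c) \<and>
     (\<forall>a\<in>A. \<forall>b\<in>A. \<exists>c\<in>A. le a c \<and> le b c)"

definition net_ev :: "'i set \<Rightarrow> ('i \<Rightarrow> 'i \<Rightarrow> bool) \<Rightarrow> ('i \<Rightarrow> bool) \<Rightarrow> bool" where
  "net_ev A le P \<longleftrightarrow> (\<exists>a\<in>A. \<forall>b\<in>A. le a b \<longrightarrow> P b)"

definition lm_conv :: "'a measure \<Rightarrow> 'i set \<Rightarrow> ('i \<Rightarrow> 'i \<Rightarrow> bool) \<Rightarrow> ('i \<Rightarrow> 'a \<Rightarrow> real)
    \<Rightarrow> ('a \<Rightarrow> real) \<Rightarrow> bool" where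
  "lm_conv M A le x f \<longleftrightarrow> (\<forall>\<epsilon>>0. \<forall>B\<in>sets M. emeasure M B < \<infinity> \<longrightarrow>
     (\<forall>\<delta>>0. net_ev A le (\<lambda>\<alpha>. measure M {t\<in>B. \<epsilon> \<le> \<bar>x \<alpha> t - f t\<bar>} < \<delta>)))"

definition lm_topology :: "'a measure \<Rightarrow> ('a \<Rightarrow> real) topology" where
  "lm_topology M = topology (\<lambda>U. U \<subseteq> Esp M \<and> (\<forall>f\<in>U. \<exists>B \<epsilon>. B \<in> sets M \<and>
      emeasure M B < \<infinity> \<and> \<epsilon> > 0 \<and>
      {g \<in> Esp M. measure M {t\<in>B. \<epsilon> \<le> \<bar>g t - f t\<bar>} < \<epsilon>} \<subseteq> U))"

definition net_limitin :: "('b topology) \<Rightarrow> 'i set \<Rightarrow> ('i \<Rightarrow> 'i \<Rightarrow> bool) \<Rightarrow> ('i \<Rightarrow> 'b)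
    \<Rightarrow> 'b \<Rightarrow> bool" where
  "net_limitin X A le x l \<longleftrightarrow> l \<in> topspace X \<and>
     (\<forall>U. openin X U \<and> l \<in> U \<longrightarrow> net_ev A le (\<lambda>\<alpha>. x \<alpha> \<in> U))"

text \<open>D is a downward directed subset of E with infimum 0 in E (the range of a net
  decreasing to 0).\<close>
definition dir_inf_zero :: "'a measure \<Rightarrow> ('a \<Rightarrow> real) set \<Rightarrow> bool" where
  "dir_inf_zero M D \<longleftrightarrow> D \<subseteq> Esp M \<and> D \<noteq> {} \<and>
     (\<forall>d1\<in>D. \<forall>d2\<in>D. \<exists>d3\<in>D. ale M d3 d1 \<and> ale M d3 d2) \<and>
     (\<forall>d\<in>D. ale M (\<lambda>t. 0) d) \<and>
     (\<forall>z\<in>Esp M. (\<forall>d\<in>D. ale M z d) \<longrightarrow> ale M z (\<lambda>t. 0))"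

definition order_conv :: "'a measure \<Rightarrow> 'i set \<Rightarrow> ('i \<Rightarrow> 'i \<Rightarrow> bool) \<Rightarrow> ('i \<Rightarrow> 'a \<Rightarrow> real)
    \<Rightarrow> ('a \<Rightarrow> real) \<Rightarrow> bool" where
  "order_conv M A le x f \<longleftrightarrow> (\<exists>D. dir_inf_zero M D \<and>
     (\<forall>d\<in>D. net_ev A le (\<lambda>\<alpha>. ale M (\<lambda>t. \<bar>x \<alpha> t - f t\<bar>) d)))"

definition uo_conv :: "'a measure \<Rightarrow> 'i set \<Rightarrow> ('i \<Rightarrow> 'i \<Rightarrow> bool) \<Rightarrow> ('i \<Rightarrow> 'a \<Rightarrow> real)
    \<Rightarrow> ('a \<Rightarrow> real) \<Rightarrow> bool" where
  "uo_conv M A le x f \<longleftrightarrow> (\<forall>u\<in>Esp M.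
     order_conv M A le (\<lambda>\<alpha> t. min \<bar>x \<alpha> t - f t\<bar> \<bar>u t\<bar>) (\<lambda>t. 0))"

definition solid :: "'a measure \<Rightarrow> ('a \<Rightarrow> real) set \<Rightarrow> bool" where
  "solid M N \<longleftrightarrow> N \<subseteq> Esp M \<and>
     (\<forall>f\<in>N. \<forall>g\<in>Esp M. ale M (\<lambda>t. \<bar>g t\<bar>) (\<lambda>t. \<bar>f t\<bar>) \<longrightarrow> g \<in> N)"

definition zero_nbhd :: "('a \<Rightarrow> real) topology \<Rightarrow> ('a \<Rightarrow> real) set \<Rightarrow> bool" where
  "zero_nbhd X N \<longleftrightarrow> (\<exists>U. openin X U \<and> (\<lambda>t. 0) \<in> U \<and> U \<subseteq> N)"

text \<open>A Hausdorff linear topology on E (represented on representatives, with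
  open sets saturated under a.e. equality) having a zero neighbourhood basis of
  solid sets.  The uo-Lebesgue condition on nets is stated separately, since it
  quantifies over nets of arbitrary index type.\<close>
definition solid_linear_top :: "'a measure \<Rightarrow> ('a \<Rightarrow> real) topology \<Rightarrow> bool" where
  "solid_linear_top M X \<longleftrightarrow>
     topspace X = Esp M \<and>
     (\<forall>U f g. openin X U \<and> f \<in> U \<and> g \<in> Esp M \<and> aeq M f g \<longrightarrow> g \<in> U) \<and>
     (\<forall>f\<in>Esp M. \<forall>g\<in>Esp M. \<not> aeq M f g \<longrightarrow>
        (\<exists>U V. openin X U \<and> openin X V \<and> f \<in> U \<and> g \<in> V \<and> U \<inter> V = {})) \<and>
     continuous_map (prod_topology X X) X (\<lambda>(f, g). \<lambda>t. f t + g t) \<and>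
     continuous_map (prod_topology euclideanreal X) X (\<lambda>(c, f). \<lambda>t. c * f t) \<and>
     (\<forall>W. zero_nbhd X W \<longrightarrow> (\<exists>N. solid M N \<and> zero_nbhd X N \<and> N \<subseteq> W))"

definition is_sup_E :: "'a measure \<Rightarrow> ('a \<Rightarrow> real) set \<Rightarrow> ('a \<Rightarrow> real) \<Rightarrow> bool" where
  "is_sup_E M S s \<longleftrightarrow> s \<in> Esp M \<and> (\<forall>f\<in>S. ale M f s) \<and>
     (\<forall>u\<in>Esp M. (\<forall>f\<in>S. ale M f u) \<longrightarrow> ale M s u)"

definition countable_sup_property :: "'a measure \<Rightarrow> bool" where
  "countable_sup_property M \<longleftrightarrow> (\<forall>S s. S \<subseteq> Esp M \<and> is_sup_E M S s \<longrightarrow>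
     (\<exists>S0\<subseteq>S. countable S0 \<and> is_sup_E M S0 s))"

definition embedded_seq :: "'i set \<Rightarrow> ('i \<Rightarrow> 'i \<Rightarrow> bool) \<Rightarrow> (nat \<Rightarrow> 'i) \<Rightarrow> bool" where
  "embedded_seq A le \<alpha> \<longleftrightarrow> (\<forall>n. \<alpha> n \<in> A \<and> le (\<alpha> n) (\<alpha> (Suc n))) \<and>
     (\<not> (\<exists>a\<in>A. \<forall>b\<in>A. le b a) \<longrightarrow> (\<forall>n. \<not> le (\<alpha> (Suc n)) (\<alpha> n)))"

end

theory Submission
  imports Defs
begin


lemma sets_restr: "B \<in> sets M \<Longrightarrow> {t\<in>space M. P t} \<in> sets M \<Longrightarrow> {t\<in>B. P t} \<in> sets M"
proof -
  assume a: "B \<in> sets M" "{t\<in>space M. P t} \<in> sets M"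
  have "{t\<in>B. P t} = B \<inter> {t\<in>space M. P t}" using sets.sets_into_space[OF a(1)] by auto
  thus ?thesis using a by auto
qed

lemma dset_sets[measurable]:
  fixes f g :: "'a \<Rightarrow> real"
  assumes "B \<in> sets M" "f \<in> borel_measurable M" "g \<in> borel_measurable M"
  shows "{t\<in>B. e \<le> \<bar>g t - f t\<bar>} \<in> sets M"
proof (rule sets_restr)
  note [measurable] = assms
  show "{t \<in> space M. e \<le> \<bar>g t - f t\<bar>} \<in> sets M" by measurable
qed (fact assms)

lemma meas_mono_AE:
  assumes "B \<in> sets M" "emeasure M B < \<infinity>" "X \<in> sets M" "Y \<in> sets M" "Y \<subseteq> B"
    "AE t in M. t \<in> X \<longrightarrow> t \<in> Y"
  shows "measure M X \<le> measure M Y"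
proof -
  have Y: "Y \<in> fmeasurable M" using assms by (meson fmeasurableI fmeasurableI2)
  have "emeasure M X \<le> emeasure M Y" by (rule emeasure_mono_AE) (use assms in auto)
  hence X: "X \<in> fmeasurable M" using Y assms by (metis fmeasurableI fmeasurable_def le_less_trans mem_Collect_eq)
  show ?thesis using emeasure_mono_AE[OF assms(6) assms(4)] X Y
    by (simp add: emeasure_eq_measure2)
qed

lemma meas_mono:
  assumes "B \<in> sets M" "emeasure M B < \<infinity>" "X \<in> sets M" "Y \<in> sets M" "Y \<subseteq> B" "X \<subseteq> Y"
  shows "measure M X \<le> measure M Y"
  using assms by (intro meas_mono_AE) auto

lemma meas_sub2:
  assumes "B \<in> sets M" "emeasure M B < \<infinity>" "X \<in> sets M" "Y \<in> sets M" "Z \<in> sets M"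
    "Y \<subseteq> B" "Z \<subseteq> B" "X \<subseteq> Y \<union> Z"
  shows "measure M X \<le> measure M Y + measure M Z"
proof -
  have "measure M X \<le> measure M (Y \<union> Z)" using assms by (intro meas_mono) auto
  also have "\<dots> \<le> measure M Y + measure M Z" using assms by (intro measure_Un_le) auto
  finally show ?thesis .
qed

lemma null_AE:
  assumes "S \<in> sets M" "emeasure M S < \<infinity>" "measure M S = 0"
  shows "AE t in M. t \<notin> S"
proof -
  have "emeasure M S = 0" using assms by (simp add: emeasure_eq_measure2 fmeasurableI)
  thus ?thesis using assms by (intro AE_not_in) auto
qed

lemma AE_null:
  assumes "S \<in> sets M" "B \<in> sets M" "emeasure M B < \<infinity>" "S \<subseteq> B" "AE t in M. t \<notin> S"
  shows "measure M S = 0"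
proof -
  have "measure M S \<le> measure M {}" using assms by (intro meas_mono_AE) auto
  thus ?thesis by (simp add: measure_le_0_iff)
qed

lemma Esp_meas: "f \<in> Esp M \<Longrightarrow> f \<in> borel_measurable M"
  by (simp add: Esp_def)

lemma EspE:
  fixes f :: "'a \<Rightarrow> real"
  assumes "f \<in> Esp M"
  obtains A :: "nat \<Rightarrow> 'a set" where "\<And>n. A n \<in> sets M" "\<And>n. emeasure M (A n) < \<infinity>"
    "AE t in M. f t \<noteq> 0 \<longrightarrow> t \<in> (\<Union>n. A n)"
proof -
  have "sigma_finite_support M f" using assms by (simp add: Esp_def)
  then obtain A :: "nat \<Rightarrow> 'a set" where "(\<forall>n. A n \<in> sets M \<and> emeasure M (A n) < \<infinity>)"
    "AE t in M. f t \<noteq> 0 \<longrightarrow> t \<in> (\<Union>n. A n)"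
    unfolding sigma_finite_support_def by (elim exE conjE)
  thus ?thesis using that by blast
qed

lemma EspI:
  fixes A :: "nat \<Rightarrow> 'a set"
  assumes "f \<in> borel_measurable M" "\<And>n. A n \<in> sets M" "\<And>n. emeasure M (A n) < \<infinity>"
    "AE t in M. f t \<noteq> 0 \<longrightarrow> t \<in> (\<Union>n. A n)"
  shows "f \<in> Esp M"
proof -
  have "sigma_finite_support M f" unfolding sigma_finite_support_def
    using assms(2-4) by (intro exI[of _ A]) simp
  thus ?thesis using assms(1) by (simp add: Esp_def)
qed

lemma fin_Un: assumes "A \<in> sets M" "B \<in> sets M" "emeasure M A < \<infinity>" "emeasure M B < \<infinity>"
  shows "emeasure M (A \<union> B) < \<infinity>"
proof -
  have "emeasure M (A \<union> B) \<le> emeasure M A + emeasure M B" using assms by (intro emeasure_subadditive) auto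
  also have "\<dots> < \<infinity>" using assms by (simp add: ennreal_add_less_top)
  finally show ?thesis .
qed

lemma Esp_add: fixes f g :: "'a \<Rightarrow> real" assumes f: "f \<in> Esp M" and g: "g \<in> Esp M" shows "(\<lambda>t. f t + g t) \<in> Esp M"
proof -
  obtain A :: "nat \<Rightarrow> 'a set" where A: "\<And>n. A n \<in> sets M" "\<And>n. emeasure M (A n) < \<infinity>" "AE t in M. f t \<noteq> 0 \<longrightarrow> t \<in> (\<Union>n. A n)"
    using EspE[OF f] by blast
  obtain A' :: "nat \<Rightarrow> 'a set" where A': "\<And>n. A' n \<in> sets M" "\<And>n. emeasure M (A' n) < \<infinity>" "AE t in M. g t \<noteq> 0 \<longrightarrow> t \<in> (\<Union>n. A' n)"
    using EspE[OF g] by blast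
  have "AE t in M. f t + g t \<noteq> 0 \<longrightarrow> t \<in> (\<Union>n. A n \<union> A' n)"
    using A(3) A'(3) by eventually_elim auto
  moreover have "(\<lambda>t. f t + g t) \<in> borel_measurable M" using Esp_meas[OF f] Esp_meas[OF g] by (rule borel_measurable_add)
  ultimately show ?thesis using A(1) A'(1) fin_Un[OF A(1) A'(1) A(2) A'(2)]
    by (intro EspI[where A="\<lambda>n. A n \<union> A' n"]) auto
qed

lemma Esp_cmult: fixes f :: "'a \<Rightarrow> real" assumes f: "f \<in> Esp M" shows "(\<lambda>t. c * f t) \<in> Esp M"
proof -
  obtain A :: "nat \<Rightarrow> 'a set" where A: "\<And>n. A n \<in> sets M" "\<And>n. emeasure M (A n) < \<infinity>" "AE t in M. f t \<noteq> 0 \<longrightarrow> t \<in> (\<Union>n. A n)"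
    using EspE[OF f] by blast
  have "AE t in M. c * f t \<noteq> 0 \<longrightarrow> t \<in> (\<Union>n. A n)"
    using A(3) by eventually_elim auto
  moreover have "(\<lambda>t. c * f t) \<in> borel_measurable M" using Esp_meas[OF f] by (intro borel_measurable_times borel_measurable_const)
  ultimately show ?thesis using A by (intro EspI[where A=A]) auto
qed

lemma Esp_fin_support:
  assumes "g \<in> borel_measurable M" "B \<in> sets M" "emeasure M B < \<infinity>" "\<And>t. t \<notin> B \<Longrightarrow> g t = 0"
  shows "g \<in> Esp M"
proof (rule EspI[where A="\<lambda>n. B"])
  show "AE t in M. g t \<noteq> 0 \<longrightarrow> t \<in> (\<Union>n. B)" using assms(4) by (intro AE_I2) auto
qed (use assms in auto)

lemma Esp_zero: "(\<lambda>t. 0) \<in> Esp M"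
  by (rule Esp_fin_support[where B="{}"]) auto

definition mb :: "'a measure \<Rightarrow> 'a set \<Rightarrow> real \<Rightarrow> ('a \<Rightarrow> real) \<Rightarrow> ('a \<Rightarrow> real) set" where
  "mb M B e f = {g \<in> Esp M. measure M {t\<in>B. e \<le> \<bar>g t - f t\<bar>} < e}"

definition opn :: "'a measure \<Rightarrow> ('a \<Rightarrow> real) set \<Rightarrow> bool" where
  "opn M U \<longleftrightarrow> U \<subseteq> Esp M \<and> (\<forall>f\<in>U. \<exists>B \<epsilon>. B \<in> sets M \<and>
      emeasure M B < \<infinity> \<and> \<epsilon> > 0 \<and> mb M B \<epsilon> f \<subseteq> U)"

lemma lm_topology_eq: "lm_topology M = topology (opn M)"
  unfolding lm_topology_def opn_def mb_def ..

lemma istop_opn: "istopology (opn M)"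
  unfolding istopology_def
proof safe
  fix S T assume S: "opn M S" and T: "opn M T"
  show "opn M (S \<inter> T)" unfolding opn_def
  proof safe
    fix x assume "x \<in> S" "x \<in> T"
    then obtain B1 e1 B2 e2 where 1: "B1 \<in> sets M" "emeasure M B1 < \<infinity>" "e1 > 0" "mb M B1 e1 x \<subseteq> S"
      and 2: "B2 \<in> sets M" "emeasure M B2 < \<infinity>" "e2 > 0" "mb M B2 e2 x \<subseteq> T"
      using S T unfolding opn_def by meson
    have sub: "mb M (B1 \<union> B2) (min e1 e2) x \<subseteq> mb M B1 e1 x \<inter> mb M B2 e2 x"
    proof
      fix g assume g: "g \<in> mb M (B1 \<union> B2) (min e1 e2) x"
      have gm: "g \<in> borel_measurable M" and xm: "x \<in> borel_measurable M"
        using g S \<open>x \<in> S\<close> by (auto simp: mb_def opn_def Esp_def)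
      have fin: "emeasure M (B1 \<union> B2) < \<infinity>" using 1 2 fin_Un by blast
      have s0: "{t\<in>B1 \<union> B2. min e1 e2 \<le> \<bar>g t - x t\<bar>} \<in> sets M"
        by (rule dset_sets) (use 1 2 gm xm in auto)
      have s1: "{t\<in>B1. e1 \<le> \<bar>g t - x t\<bar>} \<in> sets M"
        by (rule dset_sets) (use 1 2 gm xm in auto)
      have s2: "{t\<in>B2. e2 \<le> \<bar>g t - x t\<bar>} \<in> sets M"
        by (rule dset_sets) (use 1 2 gm xm in auto)
      have "measure M {t\<in>B1. e1 \<le> \<bar>g t - x t\<bar>} \<le> measure M {t\<in>B1 \<union> B2. min e1 e2 \<le> \<bar>g t - x t\<bar>}"
        by (rule meas_mono[where B="B1 \<union> B2", OF _ fin s1 s0]) (use 1 2 in auto)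
      moreover have "measure M {t\<in>B2. e2 \<le> \<bar>g t - x t\<bar>} \<le> measure M {t\<in>B1 \<union> B2. min e1 e2 \<le> \<bar>g t - x t\<bar>}"
        by (rule meas_mono[where B="B1 \<union> B2", OF _ fin s2 s0]) (use 1 2 in auto)
      ultimately show "g \<in> mb M B1 e1 x \<inter> mb M B2 e2 x" using g by (auto simp: mb_def)
    qed
    show "\<exists>B \<epsilon>. B \<in> sets M \<and> emeasure M B < \<infinity> \<and> 0 < \<epsilon> \<and> mb M B \<epsilon> x \<subseteq> S \<inter> T"
      using 1 2 sub fin_Un[of B1 M B2]
      by (intro exI[of _ "B1 \<union> B2"] exI[of _ "min e1 e2"]) auto
  qed (use S in \<open>auto simp: opn_def\<close>)
next
  fix K assume K: "\<forall>S\<in>K. opn M S"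
  show "opn M (\<Union>K)" unfolding opn_def
  proof safe
    fix x S assume "x \<in> S" "S \<in> K"
    thus "x \<in> Esp M" using K by (auto simp: opn_def)
    obtain B e where "B \<in> sets M" "emeasure M B < \<infinity>" "e > 0" "mb M B e x \<subseteq> S"
      using K \<open>x \<in> S\<close> \<open>S \<in> K\<close> unfolding opn_def by meson
    thus "\<exists>B \<epsilon>. B \<in> sets M \<and> emeasure M B < \<infinity> \<and> 0 < \<epsilon> \<and> mb M B \<epsilon> x \<subseteq> \<Union>K"
      using \<open>S \<in> K\<close> by blast
  qed
qed

lemma openin_lm: "openin (lm_topology M) = opn M"
  by (simp add: lm_topology_eq istop_opn)

lemma opn_Esp: "opn M (Esp M)"
  unfolding opn_def by (auto intro!: exI[of _ "{}"] exI[of _ 1] simp: mb_def)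

lemma topspace_lm: "topspace (lm_topology M) = Esp M"
proof -
  have "topspace (lm_topology M) = \<Union>{U. opn M U}" by (simp add: topspace_def openin_lm)
  also have "\<dots> = Esp M" using opn_Esp by (auto simp: opn_def)
  finally show ?thesis .
qed

lemma triangle_meas:
  fixes f g h :: "'a \<Rightarrow> real"
  assumes "B \<in> sets M" "emeasure M B < \<infinity>" "f \<in> borel_measurable M" "g \<in> borel_measurable M"
    "h \<in> borel_measurable M"
  shows "measure M {t\<in>B. a + b \<le> \<bar>h t - f t\<bar>} \<le>
    measure M {t\<in>B. a \<le> \<bar>g t - f t\<bar>} + measure M {t\<in>B. b \<le> \<bar>h t - g t\<bar>}"
  using assms by (intro meas_sub2[where B=B]) auto

lemma empty_dset: fixes f :: "'a \<Rightarrow> real" assumes "e > 0" shows "measure M {t\<in>B. e \<le> \<bar>f t - f t\<bar>} = 0"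
proof -
  have E: "{t\<in>B. e \<le> \<bar>f t - f t\<bar>} = {}" using assms by auto
  show ?thesis by (simp only: E measure_empty)
qed

lemma sub_open:
  assumes f: "f \<in> Esp M" and B: "B \<in> sets M" "emeasure M B < \<infinity>" and eta: "\<eta> > 0"
  shows "\<exists>V. opn M V \<and> f \<in> V \<and> V \<subseteq> mb M B \<eta> f"
proof -
  define V where "V = {g\<in>Esp M. \<exists>\<eta>'. 0 < \<eta>' \<and> \<eta>' < \<eta> \<and> measure M {t\<in>B. \<eta>' \<le> \<bar>g t - f t\<bar>} < \<eta>'}"
  have fm: "f \<in> borel_measurable M" using f by (rule Esp_meas)
  have "f \<in> V" unfolding V_def using f eta by (auto intro!: exI[of _ "\<eta>/2"])
  moreover have "V \<subseteq> mb M B \<eta> f"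
  proof
    fix g assume "g \<in> V"
    then obtain e' where g: "g \<in> Esp M" "0 < e'" "e' < \<eta>" "measure M {t\<in>B. e' \<le> \<bar>g t - f t\<bar>} < e'"
      unfolding V_def by blast
    have "measure M {t\<in>B. \<eta> \<le> \<bar>g t - f t\<bar>} \<le> measure M {t\<in>B. e' \<le> \<bar>g t - f t\<bar>}"
      using g B fm Esp_meas[OF g(1)] by (intro meas_mono[where B=B]) auto
    thus "g \<in> mb M B \<eta> f" using g by (auto simp: mb_def)
  qed
  moreover have "opn M V" unfolding opn_def
  proof safe
    fix g assume "g \<in> V"
    then obtain e' where g: "g \<in> Esp M" "0 < e'" "e' < \<eta>" "measure M {t\<in>B. e' \<le> \<bar>g t - f t\<bar>} < e'"
      unfolding V_def by blast
    define r where "r = (\<eta> - e') / 2"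
    have r: "r > 0" "e' + r < \<eta>" using g by (auto simp: r_def field_simps)
    have "mb M B r g \<subseteq> V"
    proof
      fix h assume h: "h \<in> mb M B r g"
      hence hE: "h \<in> Esp M" by (simp add: mb_def)
      have "measure M {t\<in>B. e' + r \<le> \<bar>h t - f t\<bar>} \<le>
          measure M {t\<in>B. e' \<le> \<bar>g t - f t\<bar>} + measure M {t\<in>B. r \<le> \<bar>h t - g t\<bar>}"
        using B fm Esp_meas[OF g(1)] Esp_meas[OF hE] by (rule triangle_meas)
      also have "\<dots> < e' + r" using g h by (auto simp: mb_def)
      finally show "h \<in> V" unfolding V_def using hE g r by (auto intro!: exI[of _ "e' + r"])
    qed
    thus "\<exists>B' \<epsilon>. B' \<in> sets M \<and> emeasure M B' < \<infinity> \<and> 0 < \<epsilon> \<and> mb M B' \<epsilon> g \<subseteq> V"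
      using B r by blast
  qed (auto simp: V_def)
  ultimately show ?thesis by blast
qed

lemma net_ev_mono: "net_ev A le P \<Longrightarrow> (\<And>a. a \<in> A \<Longrightarrow> P a \<Longrightarrow> Q a) \<Longrightarrow> net_ev A le Q"
  unfolding net_ev_def by blast

lemma limitin_iff_lm:
  assumes x: "\<forall>\<alpha>\<in>A. x \<alpha> \<in> Esp M" and f: "f \<in> Esp M"
  shows "net_limitin (lm_topology M) A le x f \<longleftrightarrow> lm_conv M A le x f"
proof
  assume L: "net_limitin (lm_topology M) A le x f"
  show "lm_conv M A le x f" unfolding lm_conv_def
  proof safe
    fix e d :: real and B assume e: "e > 0" and B: "B \<in> sets M" "emeasure M B < \<infinity>" and d: "d > 0"
    obtain V where V: "opn M V" "f \<in> V" "V \<subseteq> mb M B (min e d) f"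
      using sub_open[OF f B, of "min e d"] e d by auto
    have "net_ev A le (\<lambda>\<alpha>. x \<alpha> \<in> V)" using L V by (auto simp: net_limitin_def openin_lm)
    thus "net_ev A le (\<lambda>\<alpha>. measure M {t\<in>B. e \<le> \<bar>x \<alpha> t - f t\<bar>} < d)"
    proof (rule net_ev_mono)
      fix a assume "a \<in> A" "x a \<in> V"
      hence xa: "x a \<in> mb M B (min e d) f" using V by auto
      have "measure M {t\<in>B. e \<le> \<bar>x a t - f t\<bar>} \<le> measure M {t\<in>B. min e d \<le> \<bar>x a t - f t\<bar>}"
        using B Esp_meas[OF f] Esp_meas[of "x a" M] xa by (intro meas_mono[where B=B]) (auto simp: mb_def)
      thus "measure M {t\<in>B. e \<le> \<bar>x a t - f t\<bar>} < d" using xa by (auto simp: mb_def)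
    qed
  qed
next
  assume L: "lm_conv M A le x f"
  show "net_limitin (lm_topology M) A le x f" unfolding net_limitin_def topspace_lm openin_lm
  proof safe
    show "f \<in> Esp M" by fact
    fix U assume U: "opn M U" "f \<in> U"
    then obtain B e where B: "B \<in> sets M" "emeasure M B < \<infinity>" "e > 0" "mb M B e f \<subseteq> U"
      unfolding opn_def by meson
    have "net_ev A le (\<lambda>\<alpha>. measure M {t\<in>B. e \<le> \<bar>x \<alpha> t - f t\<bar>} < e)"
      using L B unfolding lm_conv_def by blast
    thus "net_ev A le (\<lambda>\<alpha>. x \<alpha> \<in> U)"
      by (rule net_ev_mono) (use x B in \<open>auto simp: mb_def\<close>)
  qed
qed

lemma fin_sub: "C \<in> sets M \<Longrightarrow> emeasure M C < \<infinity> \<Longrightarrow> S \<subseteq> C \<Longrightarrow> emeasure M S < \<infinity>"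
  by (meson emeasure_mono order.strict_trans1)

lemma sep_pos:
  fixes f g :: "'a \<Rightarrow> real"
  assumes f: "f \<in> Esp M" and g: "g \<in> Esp M" and na: "\<not> aeq M f g"
  shows "\<exists>C \<rho>. C \<in> sets M \<and> emeasure M C < \<infinity> \<and> \<rho> > 0 \<and> measure M {t\<in>C. \<rho> \<le> \<bar>g t - f t\<bar>} > 0"
proof (rule ccontr)
  assume H: "\<not> ?thesis"
  have fm: "f \<in> borel_measurable M" and gm: "g \<in> borel_measurable M" using f g by (auto simp: Esp_def)
  obtain A :: "nat \<Rightarrow> 'a set" where A: "\<And>n. A n \<in> sets M" "\<And>n. emeasure M (A n) < \<infinity>" "AE t in M. f t \<noteq> 0 \<longrightarrow> t \<in> (\<Union>n. A n)"
    using EspE[OF f] by blast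
  obtain A' :: "nat \<Rightarrow> 'a set" where A': "\<And>n. A' n \<in> sets M" "\<And>n. emeasure M (A' n) < \<infinity>" "AE t in M. g t \<noteq> 0 \<longrightarrow> t \<in> (\<Union>n. A' n)"
    using EspE[OF g] by blast
  have Z: "AE t in M. t \<notin> {t\<in>C. inverse (real (Suc k)) \<le> \<bar>g t - f t\<bar>}"
    if C: "C \<in> sets M" "emeasure M C < \<infinity>" for C k
  proof (rule null_AE)
    show S: "{t\<in>C. inverse (real (Suc k)) \<le> \<bar>g t - f t\<bar>} \<in> sets M" using C fm gm by (intro dset_sets)
    show "emeasure M {t\<in>C. inverse (real (Suc k)) \<le> \<bar>g t - f t\<bar>} < \<infinity>"
      by (rule fin_sub[OF C]) auto
    have "\<not> measure M {t\<in>C. inverse (real (Suc k)) \<le> \<bar>g t - f t\<bar>} > 0" using H C by auto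
    thus "measure M {t\<in>C. inverse (real (Suc k)) \<le> \<bar>g t - f t\<bar>} = 0"
      using measure_nonneg[of M] by (meson antisym not_less)
  qed
  have Z1: "AE t in M. \<forall>n k. t \<notin> {t\<in>A n. inverse (real (Suc k)) \<le> \<bar>g t - f t\<bar>}"
    unfolding AE_all_countable using Z A(1,2) by blast
  have Z2: "AE t in M. \<forall>n k. t \<notin> {t\<in>A' n. inverse (real (Suc k)) \<le> \<bar>g t - f t\<bar>}"
    unfolding AE_all_countable using Z A'(1,2) by blast
  have "AE t in M. f t = g t"
    using Z1 Z2 A(3) A'(3)
  proof eventually_elim
    case (elim t)
    show ?case
    proof (rule ccontr)
      assume ne: "f t \<noteq> g t"
      then obtain n where n: "n > 0" "inverse (real n) < \<bar>g t - f t\<bar>"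
        using ex_inverse_of_nat_less[of "\<bar>g t - f t\<bar>"] by auto
      hence k: "inverse (real (Suc (n - 1))) < \<bar>g t - f t\<bar>" by simp
      have k': "inverse (real (Suc (n - 1))) \<le> \<bar>g t - f t\<bar>" using k by (rule less_imp_le)
      from ne have "f t \<noteq> 0 \<or> g t \<noteq> 0" by auto
      then show False
      proof
        assume "f t \<noteq> 0"
        then obtain j where "t \<in> A j" using elim(3) by auto
        thus False using elim(1) k' by blast
      next
        assume "g t \<noteq> 0"
        then obtain j where "t \<in> A' j" using elim(4) by auto
        thus False using elim(2) k' by blast
      qed
    qed
  qed
  thus False using na by (simp add: aeq_def)
qed

lemma hausdorff:
  fixes f g :: "'a \<Rightarrow> real"
  assumes f: "f \<in> Esp M" and g: "g \<in> Esp M" and na: "\<not> aeq M f g"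
  shows "\<exists>U V. opn M U \<and> opn M V \<and> f \<in> U \<and> g \<in> V \<and> U \<inter> V = {}"
proof -
  obtain C \<rho> where C: "C \<in> sets M" "emeasure M C < \<infinity>" and r: "\<rho> > 0"
    and m: "measure M {t\<in>C. \<rho> \<le> \<bar>g t - f t\<bar>} > 0"
    using sep_pos[OF f g na] by blast
  define m where "m = measure M {t\<in>C. \<rho> \<le> \<bar>g t - f t\<bar>}"
  define \<eta> where "\<eta> = min (\<rho>/2) (m/2)"
  have eta: "\<eta> > 0" using r m by (simp add: \<eta>_def m_def)
  obtain U where U: "opn M U" "f \<in> U" "U \<subseteq> mb M C \<eta> f" using sub_open[OF f C eta] by blast
  obtain V where V: "opn M V" "g \<in> V" "V \<subseteq> mb M C \<eta> g" using sub_open[OF g C eta] by blast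
  have "U \<inter> V = {}"
  proof (rule ccontr)
    assume "U \<inter> V \<noteq> {}"
    then obtain h where h: "h \<in> mb M C \<eta> f" "h \<in> mb M C \<eta> g" using U V by blast
    have hm: "h \<in> borel_measurable M" using h by (auto simp: mb_def Esp_def)
    have fm: "f \<in> borel_measurable M" and gm: "g \<in> borel_measurable M" using f g by (auto simp: Esp_def)
    have "m \<le> measure M {t\<in>C. \<eta> \<le> \<bar>h t - f t\<bar>} + measure M {t\<in>C. \<eta> \<le> \<bar>h t - g t\<bar>}"
      unfolding m_def
    proof (rule meas_sub2[OF C])
      show "{t\<in>C. \<rho> \<le> \<bar>g t - f t\<bar>} \<subseteq> {t\<in>C. \<eta> \<le> \<bar>h t - f t\<bar>} \<union> {t\<in>C. \<eta> \<le> \<bar>h t - g t\<bar>}"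
      proof
        fix t assume t: "t \<in> {t\<in>C. \<rho> \<le> \<bar>g t - f t\<bar>}"
        have "2 * \<eta> \<le> \<rho>" by (simp add: \<eta>_def)
        thus "t \<in> {t\<in>C. \<eta> \<le> \<bar>h t - f t\<bar>} \<union> {t\<in>C. \<eta> \<le> \<bar>h t - g t\<bar>}"
          using t by auto
      qed
    qed (use C fm gm hm in \<open>auto intro: dset_sets\<close>)
    also have "\<dots> < \<eta> + \<eta>" using h by (intro add_strict_mono) (auto simp: mb_def)
    also have "\<dots> \<le> m" by (simp add: \<eta>_def)
    finally show False by simp
  qed
  thus ?thesis using U V by blast
qed

lemma saturated:
  fixes f g :: "'a \<Rightarrow> real"
  assumes U: "opn M U" and f: "f \<in> U" and g: "g \<in> Esp M" and a: "aeq M f g"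
  shows "g \<in> U"
proof -
  obtain B e where B: "B \<in> sets M" "emeasure M B < \<infinity>" "e > 0" "mb M B e f \<subseteq> U"
    using U f unfolding opn_def by meson
  have fm: "f \<in> borel_measurable M" using U f by (auto simp: opn_def Esp_def)
  have gm: "g \<in> borel_measurable M" using g by (auto simp: Esp_def)
  have "measure M {t\<in>B. e \<le> \<bar>g t - f t\<bar>} = 0"
  proof (rule AE_null[OF _ B(1,2)])
    show "AE t in M. t \<notin> {t\<in>B. e \<le> \<bar>g t - f t\<bar>}"
      using a unfolding aeq_def by eventually_elim (use B in auto)
  qed (use B fm gm in \<open>auto intro: dset_sets\<close>)
  thus ?thesis using B g by (auto simp: mb_def)
qed



lemma ess_sup_fin:
  fixes F :: "('a \<Rightarrow> real) set"
  assumes Fm: "F \<subseteq> borel_measurable M" and B: "B \<in> sets M" "emeasure M B < \<infinity>"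
  shows "\<exists>F0\<subseteq>F. countable F0 \<and> (\<forall>g\<in>F. \<forall>u. (\<forall>f\<in>F0. AE t in M. f t \<le> u t) \<longrightarrow>
            (AE t in M. t \<in> B \<longrightarrow> g t \<le> u t))"
proof (cases "F = {}")
  case True thus ?thesis by auto
next
  case False
  then obtain f0 where f0: "f0 \<in> F" by blast
  define \<Phi> where "\<Phi> C t = (SUP f\<in>insert f0 C. arctan (f t))" for C and t
  define v where "v C = (\<integral>t. indicator B t * \<Phi> C t \<partial>M)" for C
  define CC where "CC = {C. C \<subseteq> F \<and> countable C}"
  have bdd: "bdd_above ((\<lambda>f. arctan (f t)) ` X)" for X and t :: 'a
  proof (rule bdd_aboveI[of _ "pi/2"])
    fix y assume "y \<in> (\<lambda>f. arctan (f t)) ` X"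
    then obtain f where "y = arctan (f t)" by auto
    thus "y \<le> pi/2" using arctan_ubound[of "f t"] by linarith
  qed
  have Phi_ub: "\<Phi> C t \<le> pi/2" for C t
    unfolding \<Phi>_def
  proof (rule cSUP_least)
    fix f show "arctan (f t) \<le> pi/2" using arctan_ubound[of "f t"] by linarith
  qed auto
  have Phi_lb: "arctan (f t) \<le> \<Phi> C t" if "f \<in> insert f0 C" for f C t
    unfolding \<Phi>_def by (rule cSUP_upper[OF that bdd])
  have Phi_lb2: "- (pi/2) \<le> \<Phi> C t" for C t
    using Phi_lb[of f0 C t] arctan_lbound[of "f0 t"] by auto
  have Phi_mono: "\<Phi> C t \<le> \<Phi> C' t" if "C \<subseteq> C'" for C C' t
    unfolding \<Phi>_def by (rule cSUP_subset_mono) (use that bdd in auto)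
  have Phi_meas: "\<Phi> C \<in> borel_measurable M" if "C \<in> CC" for C
  proof -
    have cnt: "countable (insert f0 C)" using that by (auto simp: CC_def)
    have "(\<lambda>t. SUP f\<in>insert f0 C. arctan (f t)) \<in> borel_measurable M"
    proof (rule borel_measurable_cSUP[OF cnt])
      fix f assume "f \<in> insert f0 C"
      hence [measurable]: "f \<in> borel_measurable M" using that f0 Fm by (auto simp: CC_def)
      show "(\<lambda>t. arctan (f t)) \<in> borel_measurable M" by measurable
    qed (rule bdd)
    thus ?thesis unfolding \<Phi>_def by (simp add: fun_eq_iff)
  qed
  have int: "integrable M (\<lambda>t. indicator B t * \<Phi> C t)" if "C \<in> CC" for C
  proof (rule integrableI_bounded_set[OF B(1) _ B(2), where B="pi/2"])
    show "(\<lambda>t. indicator B t * \<Phi> C t) \<in> borel_measurable M"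
      using Phi_meas[OF that] B by measurable
    show "AE t in M. t \<in> B \<longrightarrow> norm (indicator B t * \<Phi> C t) \<le> pi/2"
    proof (intro AE_I2 impI)
      fix t
      have "\<bar>\<Phi> C t\<bar> \<le> pi/2" using Phi_ub[of C t] Phi_lb2[of C t] by (intro abs_leI) linarith+
      thus "norm (indicator B t * \<Phi> C t) \<le> pi/2" by (auto simp: indicator_def)
    qed
    show "AE t in M. t \<notin> B \<longrightarrow> indicator B t * \<Phi> C t = 0" by auto
  qed
  have int2: "integrable M (\<lambda>t. indicator B t * (pi/2))"
    by (rule integrableI_bounded_set[OF B(1) _ B(2), where B="pi/2"]) (use B in auto)
  have v_mono: "v C \<le> v C'" if "C \<in> CC" "C' \<in> CC" "C \<subseteq> C'" for C C'
    unfolding v_def by (rule integral_mono[OF int[OF that(1)] int[OF that(2)]])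
      (auto intro: mult_left_mono Phi_mono[OF that(3)])
  have v_ub: "v C \<le> (\<integral>t. indicator B t * (pi/2) \<partial>M)" if "C \<in> CC" for C
    unfolding v_def by (rule integral_mono[OF int[OF that] int2]) (rule mult_left_mono[OF Phi_ub], simp)
  have CCne: "CC \<noteq> {}" unfolding CC_def by blast
  have bddv: "bdd_above (v ` CC)"
    by (rule bdd_aboveI[of _ "\<integral>t. indicator B t * (pi/2) \<partial>M"]) (use v_ub in blast)
  define V where "V = (SUP C\<in>CC. v C)"
  have "\<exists>C\<in>CC. V - inverse (real (Suc n)) < v C" for n
    unfolding V_def by (subst less_cSUP_iff[OF CCne bddv, symmetric]) (simp add: V_def[symmetric])
  then obtain Cs where Cs: "\<And>n. Cs n \<in> CC" "\<And>n. V - inverse (real (Suc n)) < v (Cs n)" by metis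
  define Cinf where "Cinf = (\<Union>n. Cs n)"
  have Cinf: "Cinf \<in> CC" using Cs(1) unfolding CC_def Cinf_def by auto
  have vCinf: "v Cinf = V"
  proof (rule antisym)
    show "v Cinf \<le> V" unfolding V_def by (rule cSUP_upper[OF Cinf bddv])
    show "V \<le> v Cinf"
    proof (rule field_le_epsilon)
      fix e :: real assume e: "e > 0"
      then obtain n where n: "n > 0" "inverse (real n) < e" using ex_inverse_of_nat_less by blast
      have "V - inverse (real (Suc (n - 1))) < v (Cs (n - 1))" by (rule Cs(2))
      also have "\<dots> \<le> v Cinf" using Cs(1) Cinf by (intro v_mono) (auto simp: Cinf_def)
      finally show "V \<le> v Cinf + e" using n by simp
    qed
  qed
  define F0 where "F0 = insert f0 Cinf"
  have F0: "F0 \<subseteq> F" "countable F0" using Cinf f0 by (auto simp: F0_def CC_def)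
  have key: "AE t in M. t \<in> B \<longrightarrow> arctan (g t) \<le> \<Phi> Cinf t" if g: "g \<in> F" for g
  proof -
    have C': "insert g Cinf \<in> CC" using Cinf g by (auto simp: CC_def)
    have "v (insert g Cinf) \<le> V" unfolding V_def by (rule cSUP_upper[OF C' bddv])
    hence le: "v (insert g Cinf) - v Cinf \<le> 0" using vCinf by simp
    have eq: "(\<lambda>t. indicator B t * (\<Phi> (insert g Cinf) t - \<Phi> Cinf t)) =
        (\<lambda>t. indicator B t * \<Phi> (insert g Cinf) t - indicator B t * \<Phi> Cinf t)"
      by (auto simp: fun_eq_iff right_diff_distrib)
    have "v (insert g Cinf) - v Cinf = (\<integral>t. indicator B t * (\<Phi> (insert g Cinf) t - \<Phi> Cinf t) \<partial>M)"
      unfolding v_def eq using Bochner_Integration.integral_diff[OF int[OF C'] int[OF Cinf]] by simp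
    moreover have nn: "AE t in M. 0 \<le> indicator B t * (\<Phi> (insert g Cinf) t - \<Phi> Cinf t)"
    proof (intro AE_I2)
      fix t
      have "\<Phi> Cinf t \<le> \<Phi> (insert g Cinf) t" by (rule Phi_mono) auto
      thus "0 \<le> indicator B t * (\<Phi> (insert g Cinf) t - \<Phi> Cinf t)" by simp
    qed
    moreover have intd: "integrable M (\<lambda>t. indicator B t * (\<Phi> (insert g Cinf) t - \<Phi> Cinf t))"
      unfolding eq using int[OF C'] int[OF Cinf] by (rule Bochner_Integration.integrable_diff)
    ultimately have "(\<integral>t. indicator B t * (\<Phi> (insert g Cinf) t - \<Phi> Cinf t) \<partial>M) = 0"
      using le integral_nonneg_AE[OF nn] by linarith
    hence "AE t in M. indicator B t * (\<Phi> (insert g Cinf) t - \<Phi> Cinf t) = 0"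
      using integral_nonneg_eq_0_iff_AE[OF intd nn] by simp
    thus ?thesis
    proof eventually_elim
      case (elim t)
      show ?case
      proof
        assume "t \<in> B"
        hence "\<Phi> (insert g Cinf) t = \<Phi> Cinf t" using elim by simp
        thus "arctan (g t) \<le> \<Phi> Cinf t" using Phi_lb[of g "insert g Cinf" t] by simp
      qed
    qed
  qed
  have "\<forall>g\<in>F. \<forall>u. (\<forall>f\<in>F0. AE t in M. f t \<le> u t) \<longrightarrow> (AE t in M. t \<in> B \<longrightarrow> g t \<le> u t)"
  proof (intro ballI allI impI)
    fix g u assume g: "g \<in> F" and u: "\<forall>f\<in>F0. AE t in M. f t \<le> u t"
    have "AE t in M. \<forall>f\<in>F0. f t \<le> u t" using u F0(2) by (simp add: AE_ball_countable)
    with key[OF g] show "AE t in M. t \<in> B \<longrightarrow> g t \<le> u t"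
    proof eventually_elim
      case (elim t)
      show ?case
      proof
        assume tB: "t \<in> B"
        have "\<Phi> Cinf t \<le> arctan (u t)" unfolding \<Phi>_def
          by (rule cSUP_least) (use elim in \<open>auto simp: F0_def arctan_le_iff\<close>)
        hence "arctan (g t) \<le> arctan (u t)" using elim tB by linarith
        thus "g t \<le> u t" by (simp add: arctan_le_iff)
      qed
    qed
  qed
  thus ?thesis using F0 by blast
qed



lemma cont_add: "continuous_map (prod_topology (lm_topology M) (lm_topology M)) (lm_topology M) (\<lambda>(f, g). \<lambda>t. f t + g t)"
proof -
  have "openin (prod_topology (lm_topology M) (lm_topology M)) {x \<in> Esp M \<times> Esp M. (case x of (f, g) \<Rightarrow> \<lambda>t. f t + g t) \<in> U}"
    if U: "opn M U" for U
    unfolding openin_prod_topology_alt openin_lm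
  proof (intro allI impI)
    fix f g assume fg: "(f, g) \<in> {x \<in> Esp M \<times> Esp M. (case x of (f, g) \<Rightarrow> \<lambda>t. f t + g t) \<in> U}"
    hence f: "f \<in> Esp M" and g: "g \<in> Esp M" and s: "(\<lambda>t. f t + g t) \<in> U" by auto
    obtain B e where B: "B \<in> sets M" "emeasure M B < \<infinity>" "e > 0" "mb M B e (\<lambda>t. f t + g t) \<subseteq> U"
      using U s unfolding opn_def by meson
    have e2: "e/2 > 0" using B by simp
    obtain V where V: "opn M V" "f \<in> V" "V \<subseteq> mb M B (e/2) f" using sub_open[OF f B(1,2) e2] by blast
    obtain W where W: "opn M W" "g \<in> W" "W \<subseteq> mb M B (e/2) g" using sub_open[OF g B(1,2) e2] by blast
    have "V \<times> W \<subseteq> {x \<in> Esp M \<times> Esp M. (case x of (f, g) \<Rightarrow> \<lambda>t. f t + g t) \<in> U}"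
    proof (rule subrelI)
      fix f' g' assume fg': "(f', g') \<in> V \<times> W"
      hence f': "f' \<in> mb M B (e/2) f" and g': "g' \<in> mb M B (e/2) g" using V W by auto
      have f'E: "f' \<in> Esp M" using f' by (auto simp: mb_def)
      have g'E: "g' \<in> Esp M" using g' by (auto simp: mb_def)
      note [measurable] = Esp_meas[OF f] Esp_meas[OF g] Esp_meas[OF f'E] Esp_meas[OF g'E]
      have sub: "{t\<in>B. e \<le> \<bar>(f' t + g' t) - (f t + g t)\<bar>} \<subseteq> {t\<in>B. e/2 \<le> \<bar>f' t - f t\<bar>} \<union> {t\<in>B. e/2 \<le> \<bar>g' t - g t\<bar>}"
      proof
        fix t assume t: "t \<in> {t\<in>B. e \<le> \<bar>(f' t + g' t) - (f t + g t)\<bar>}"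
        have "\<bar>(f' t + g' t) - (f t + g t)\<bar> \<le> \<bar>f' t - f t\<bar> + \<bar>g' t - g t\<bar>"
          using abs_triangle_ineq[of "f' t - f t" "g' t - g t"] by simp
        thus "t \<in> {t\<in>B. e/2 \<le> \<bar>f' t - f t\<bar>} \<union> {t\<in>B. e/2 \<le> \<bar>g' t - g t\<bar>}" using t by auto
      qed
      have "measure M {t\<in>B. e \<le> \<bar>(f' t + g' t) - (f t + g t)\<bar>} \<le>
          measure M {t\<in>B. e/2 \<le> \<bar>f' t - f t\<bar>} + measure M {t\<in>B. e/2 \<le> \<bar>g' t - g t\<bar>}"
      proof (rule meas_sub2[OF B(1,2) _ _ _ _ _ sub])
        show "{t\<in>B. e/2 \<le> \<bar>f' t - f t\<bar>} \<in> sets M" by (rule dset_sets[OF B(1)]) measurable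
        show "{t\<in>B. e/2 \<le> \<bar>g' t - g t\<bar>} \<in> sets M" by (rule dset_sets[OF B(1)]) measurable
        show "{t\<in>B. e \<le> \<bar>(f' t + g' t) - (f t + g t)\<bar>} \<in> sets M" by (rule dset_sets[OF B(1)]) measurable
      qed auto
      also have "\<dots> < e/2 + e/2" using f' g' by (intro add_strict_mono) (auto simp: mb_def)
      finally have "(\<lambda>t. f' t + g' t) \<in> mb M B e (\<lambda>t. f t + g t)" using Esp_add[OF f'E g'E] by (simp add: mb_def)
      thus "(f', g') \<in> {x \<in> Esp M \<times> Esp M. (case x of (f, g) \<Rightarrow> \<lambda>t. f t + g t) \<in> U}"
        using B f'E g'E by auto
    qed
    thus "\<exists>U' V'. opn M U' \<and> opn M V' \<and> f \<in> U' \<and> g \<in> V' \<and>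
        U' \<times> V' \<subseteq> {x \<in> Esp M \<times> Esp M. (case x of (f, g) \<Rightarrow> \<lambda>t. f t + g t) \<in> U}"
      using V W by blast
  qed
  thus ?thesis unfolding continuous_map_def topspace_prod_topology topspace_lm openin_lm
    by (auto intro: Esp_add)
qed

lemma K_exists:
  fixes f :: "'a \<Rightarrow> real"
  assumes fm: "f \<in> borel_measurable M" and B: "B \<in> sets M" "emeasure M B < \<infinity>" and e: "e > 0"
  shows "\<exists>K>0. measure M {t\<in>B. K \<le> \<bar>f t\<bar>} < e"
proof -
  define S where "S n = {t\<in>B. real n \<le> \<bar>f t\<bar>}" for n
  have Sm: "S n \<in> sets M" for n unfolding S_def
    by (rule sets_restr[OF B(1)]) (use fm in measurable)
  have dec: "decseq S" unfolding decseq_def S_def by auto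
  have fin: "emeasure M (S n) \<noteq> \<infinity>" for n using fin_sub[OF B, of "S n"] by (auto simp: S_def)
  have I: "(\<Inter>n. S n) = {}"
  proof -
    have "t \<notin> S (nat (ceiling (\<bar>f t\<bar> + 1)))" for t
      by (simp add: S_def) linarith
    thus ?thesis by blast
  qed
  have "(\<lambda>n. measure M (S n)) \<longlonglongrightarrow> 0" using Lim_measure_decseq[of S M] Sm dec fin I by auto
  from order_tendstoD(2)[OF this e] obtain N where N: "measure M (S N) < e"
    by (auto simp: eventually_sequentially)
  have "measure M {t\<in>B. real N + 1 \<le> \<bar>f t\<bar>} \<le> measure M (S N)"
    by (rule meas_mono[OF B _ Sm]) (auto simp: S_def intro!: sets_restr[OF B(1)], use fm in measurable)
  thus ?thesis using N by (intro exI[of _ "real N + 1"]) auto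
qed

lemma cont_cmult: "continuous_map (prod_topology euclideanreal (lm_topology M)) (lm_topology M) (\<lambda>(c, f). \<lambda>t. c * f t)"
proof -
  have "openin (prod_topology euclideanreal (lm_topology M)) {x \<in> UNIV \<times> Esp M. (case x of (c, f) \<Rightarrow> \<lambda>t. c * f t) \<in> U}"
    if U: "opn M U" for U
    unfolding openin_prod_topology_alt openin_lm
  proof (intro allI impI)
    fix c :: real and f assume cf: "(c, f) \<in> {x \<in> UNIV \<times> Esp M. (case x of (c, f) \<Rightarrow> \<lambda>t. c * f t) \<in> U}"
    hence f: "f \<in> Esp M" and s: "(\<lambda>t. c * f t) \<in> U" by auto
    note fm[measurable] = Esp_meas[OF f]
    obtain B e where B: "B \<in> sets M" "emeasure M B < \<infinity>" "e > 0" "mb M B e (\<lambda>t. c * f t) \<subseteq> U"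
      using U s unfolding opn_def by meson
    have e3: "e/3 > 0" using B by simp
    obtain K where K: "K > 0" "measure M {t\<in>B. K \<le> \<bar>f t\<bar>} < e/3"
      using K_exists[OF fm B(1,2) e3] by blast
    define r where "r = e / (3 * K)"
    define L where "L = \<bar>c\<bar> + r"
    define \<eta> where "\<eta> = e / (3 * (L + 1))"
    have r: "r > 0" "r * K = e/3" using K B by (auto simp: r_def field_simps)
    have L: "L \<ge> 0" using r by (simp add: L_def)
    have eta: "\<eta> > 0" "\<eta> * (L + 1) = e/3" using L B by (auto simp: \<eta>_def field_simps)
    have eta3: "\<eta> \<le> e/3" "L * \<eta> \<le> e/3" using eta L by (auto simp: algebra_simps)
    obtain W where W: "opn M W" "f \<in> W" "W \<subseteq> mb M B \<eta> f" using sub_open[OF f B(1,2) eta(1)] by blast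
    have I: "openin euclideanreal {c-r<..<c+r}" by (simp add: open_openin[symmetric])
    have "{c-r<..<c+r} \<times> W \<subseteq> {x \<in> UNIV \<times> Esp M. (case x of (c, f) \<Rightarrow> \<lambda>t. c * f t) \<in> U}"
    proof (rule subrelI)
      fix c' f' assume cf': "(c', f') \<in> {c-r<..<c+r} \<times> W"
      hence c': "c - r < c'" "c' < c + r" and f': "f' \<in> mb M B \<eta> f" using W by auto
      have f'E: "f' \<in> Esp M" using f' by (auto simp: mb_def)
      note [measurable] = Esp_meas[OF f'E]
      have c'L: "\<bar>c'\<bar> \<le> L" and c'r: "\<bar>c' - c\<bar> \<le> r" using c' by (auto simp: L_def)
      have sub: "{t\<in>B. e \<le> \<bar>c' * f' t - c * f t\<bar>} \<subseteq> {t\<in>B. K \<le> \<bar>f t\<bar>} \<union> {t\<in>B. \<eta> \<le> \<bar>f' t - f t\<bar>}"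
      proof
        fix t assume t: "t \<in> {t\<in>B. e \<le> \<bar>c' * f' t - c * f t\<bar>}"
        show "t \<in> {t\<in>B. K \<le> \<bar>f t\<bar>} \<union> {t\<in>B. \<eta> \<le> \<bar>f' t - f t\<bar>}"
        proof (rule ccontr)
          assume "t \<notin> {t\<in>B. K \<le> \<bar>f t\<bar>} \<union> {t\<in>B. \<eta> \<le> \<bar>f' t - f t\<bar>}"
          hence a1: "\<bar>f t\<bar> \<le> K" and a2: "\<bar>f' t - f t\<bar> \<le> \<eta>" using t by auto
          have "c' * f' t - c * f t = c' * (f' t - f t) + (c' - c) * f t" by (simp add: algebra_simps)
          hence "\<bar>c' * f' t - c * f t\<bar> \<le> \<bar>c'\<bar> * \<bar>f' t - f t\<bar> + \<bar>c' - c\<bar> * \<bar>f t\<bar>"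
            by (metis abs_mult abs_triangle_ineq)
          also have "\<dots> \<le> L * \<eta> + r * K"
            using c'L c'r a1 a2 L r by (intro add_mono mult_mono) auto
          also have "\<dots> < e" using eta3 r B by linarith
          finally show False using t by simp
        qed
      qed
      have "measure M {t\<in>B. e \<le> \<bar>c' * f' t - c * f t\<bar>} \<le>
          measure M {t\<in>B. K \<le> \<bar>f t\<bar>} + measure M {t\<in>B. \<eta> \<le> \<bar>f' t - f t\<bar>}"
      proof (rule meas_sub2[OF B(1,2) _ _ _ _ _ sub])
        show "{t\<in>B. K \<le> \<bar>f t\<bar>} \<in> sets M" by (rule sets_restr[OF B(1)]) measurable
        show "{t\<in>B. \<eta> \<le> \<bar>f' t - f t\<bar>} \<in> sets M" by (rule dset_sets[OF B(1)]) measurable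
        show "{t\<in>B. e \<le> \<bar>c' * f' t - c * f t\<bar>} \<in> sets M" by (rule dset_sets[OF B(1)]) measurable
      qed auto
      also have "\<dots> < e/3 + \<eta>" using K f' by (intro add_strict_mono) (auto simp: mb_def)
      also have "\<dots> < e" using eta3 B by linarith
      finally have "(\<lambda>t. c' * f' t) \<in> mb M B e (\<lambda>t. c * f t)" using Esp_cmult[OF f'E] by (simp add: mb_def)
      thus "(c', f') \<in> {x \<in> UNIV \<times> Esp M. (case x of (c, f) \<Rightarrow> \<lambda>t. c * f t) \<in> U}"
        using B f'E by auto
    qed
    thus "\<exists>U' V'. openin euclideanreal U' \<and> opn M V' \<and> c \<in> U' \<and> f \<in> V' \<and>
        U' \<times> V' \<subseteq> {x \<in> UNIV \<times> Esp M. (case x of (c, f) \<Rightarrow> \<lambda>t. c * f t) \<in> U}"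
      using W I r by (intro exI[of _ "{c-r<..<c+r}"] exI[of _ W]) auto
  qed
  thus ?thesis unfolding continuous_map_def topspace_prod_topology topspace_lm openin_lm
    by (auto intro: Esp_cmult)
qed

lemma solid_basis:
  assumes "zero_nbhd (lm_topology M) W"
  shows "\<exists>N. solid M N \<and> zero_nbhd (lm_topology M) N \<and> N \<subseteq> W"
proof -
  obtain U where U: "opn M U" "(\<lambda>t. 0) \<in> U" "U \<subseteq> W" using assms by (auto simp: zero_nbhd_def openin_lm)
  obtain B e where B: "B \<in> sets M" "emeasure M B < \<infinity>" "e > 0" "mb M B e (\<lambda>t. 0) \<subseteq> U"
    using U unfolding opn_def by meson
  have "solid M (mb M B e (\<lambda>t. 0))" unfolding solid_def
  proof safe
    fix f g assume f: "f \<in> mb M B e (\<lambda>t. 0)" and g: "g \<in> Esp M" and a: "ale M (\<lambda>t. \<bar>g t\<bar>) (\<lambda>t. \<bar>f t\<bar>)"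
    have fE: "f \<in> Esp M" using f by (simp add: mb_def)
    note [measurable] = Esp_meas[OF fE] Esp_meas[OF g]
    have "measure M {t\<in>B. e \<le> \<bar>g t - 0\<bar>} \<le> measure M {t\<in>B. e \<le> \<bar>f t - 0\<bar>}"
    proof (rule meas_mono_AE[OF B(1,2)])
      show "{t\<in>B. e \<le> \<bar>g t - 0\<bar>} \<in> sets M" by (rule sets_restr[OF B(1)]) measurable
      show "{t\<in>B. e \<le> \<bar>f t - 0\<bar>} \<in> sets M" by (rule sets_restr[OF B(1)]) measurable
      show "AE t in M. t \<in> {t\<in>B. e \<le> \<bar>g t - 0\<bar>} \<longrightarrow> t \<in> {t\<in>B. e \<le> \<bar>f t - 0\<bar>}"
        using a unfolding ale_def by eventually_elim auto
    qed auto
    thus "g \<in> mb M B e (\<lambda>t. 0)" using f g by (simp add: mb_def)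
  qed (auto simp: mb_def)
  moreover have "zero_nbhd (lm_topology M) (mb M B e (\<lambda>t. 0))"
    using sub_open[OF Esp_zero B(1,2,3)] unfolding zero_nbhd_def openin_lm by blast
  ultimately show ?thesis using B U by blast
qed

lemma slt: "solid_linear_top M (lm_topology M)"
  unfolding solid_linear_top_def
proof (intro conjI)
  show "topspace (lm_topology M) = Esp M" by (rule topspace_lm)
  show "\<forall>U f g. openin (lm_topology M) U \<and> f \<in> U \<and> g \<in> Esp M \<and> aeq M f g \<longrightarrow> g \<in> U"
    using saturated unfolding openin_lm by blast
  show "\<forall>f\<in>Esp M. \<forall>g\<in>Esp M. \<not> aeq M f g \<longrightarrow>
        (\<exists>U V. openin (lm_topology M) U \<and> openin (lm_topology M) V \<and> f \<in> U \<and> g \<in> V \<and> U \<inter> V = {})"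
    using hausdorff unfolding openin_lm by blast
qed (use cont_add cont_cmult solid_basis in auto)



lemma ess_sup_cnt:
  fixes F :: "('a \<Rightarrow> real) set" and CC :: "'a set set"
  assumes Fm: "F \<subseteq> borel_measurable M" and CC: "countable CC" "\<And>C. C \<in> CC \<Longrightarrow> C \<in> sets M \<and> emeasure M C < \<infinity>"
  shows "\<exists>F0\<subseteq>F. countable F0 \<and> (\<forall>g\<in>F. \<forall>u. (\<forall>f\<in>F0. AE t in M. f t \<le> u t) \<longrightarrow>
            (AE t in M. t \<in> \<Union>CC \<longrightarrow> g t \<le> u t))"
proof -
  have "\<forall>C\<in>CC. \<exists>F0\<subseteq>F. countable F0 \<and> (\<forall>g\<in>F. \<forall>u. (\<forall>f\<in>F0. AE t in M. f t \<le> u t) \<longrightarrow>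
            (AE t in M. t \<in> C \<longrightarrow> g t \<le> u t))"
    using ess_sup_fin[OF Fm] CC(2) by blast
  then obtain G where G: "\<And>C. C \<in> CC \<Longrightarrow> G C \<subseteq> F \<and> countable (G C) \<and> (\<forall>g\<in>F. \<forall>u. (\<forall>f\<in>G C. AE t in M. f t \<le> u t) \<longrightarrow>
            (AE t in M. t \<in> C \<longrightarrow> g t \<le> u t))"
    by metis
  define F0 where "F0 = (\<Union>C\<in>CC. G C)"
  have F0: "F0 \<subseteq> F" "countable F0" using G CC(1) by (auto simp: F0_def)
  have "\<forall>g\<in>F. \<forall>u. (\<forall>f\<in>F0. AE t in M. f t \<le> u t) \<longrightarrow> (AE t in M. t \<in> \<Union>CC \<longrightarrow> g t \<le> u t)"
  proof (intro ballI allI impI)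
    fix g u assume g: "g \<in> F" and u: "\<forall>f\<in>F0. AE t in M. f t \<le> u t"
    have "\<forall>C\<in>CC. AE t in M. t \<in> C \<longrightarrow> g t \<le> u t"
    proof
      fix C assume C: "C \<in> CC"
      thus "AE t in M. t \<in> C \<longrightarrow> g t \<le> u t" using G[OF C] g u by (auto simp: F0_def)
    qed
    hence "AE t in M. \<forall>C\<in>CC. t \<in> C \<longrightarrow> g t \<le> u t" by (simp only: AE_ball_countable[OF CC(1)])
    thus "AE t in M. t \<in> \<Union>CC \<longrightarrow> g t \<le> u t" by eventually_elim auto
  qed
  thus ?thesis using F0 by blast
qed

lemma csp: "countable_sup_property M"
  unfolding countable_sup_property_def
proof (intro allI impI, elim conjE)
  fix S s assume SE: "S \<subseteq> Esp M" and sup: "is_sup_E M S s"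
  show "\<exists>S0\<subseteq>S. countable S0 \<and> is_sup_E M S0 s"
  proof (cases "S = {}")
    case True thus ?thesis using sup by (intro exI[of _ "{}"]) auto
  next
    case False
    then obtain f1 where f1: "f1 \<in> S" by blast
    have sE: "s \<in> Esp M" using sup by (simp add: is_sup_E_def)
    obtain As :: "nat \<Rightarrow> 'a set" where As: "\<And>n. As n \<in> sets M" "\<And>n. emeasure M (As n) < \<infinity>"
      "AE t in M. s t \<noteq> 0 \<longrightarrow> t \<in> (\<Union>n. As n)" using EspE[OF sE] by blast
    obtain Af :: "nat \<Rightarrow> 'a set" where Af: "\<And>n. Af n \<in> sets M" "\<And>n. emeasure M (Af n) < \<infinity>"
      "AE t in M. f1 t \<noteq> 0 \<longrightarrow> t \<in> (\<Union>n. Af n)" using EspE[of f1 M] f1 SE by blast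
    define CC where "CC = range As \<union> range Af"
    have CC: "countable CC" "\<And>C. C \<in> CC \<Longrightarrow> C \<in> sets M \<and> emeasure M C < \<infinity>"
      using As Af by (auto simp: CC_def)
    have Sm: "S \<subseteq> borel_measurable M" using SE by (auto simp: Esp_def)
    obtain G where G: "G \<subseteq> S" "countable G" "\<forall>g\<in>S. \<forall>u. (\<forall>f\<in>G. AE t in M. f t \<le> u t) \<longrightarrow>
            (AE t in M. t \<in> \<Union>CC \<longrightarrow> g t \<le> u t)"
      using ess_sup_cnt[OF Sm CC] by blast
    define S0 where "S0 = insert f1 G"
    have S0: "S0 \<subseteq> S" "countable S0" using G f1 by (auto simp: S0_def)
    have "is_sup_E M S0 s" unfolding is_sup_E_def
    proof (intro conjI ballI impI)
      show "s \<in> Esp M" by fact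
      show "ale M f s" if "f \<in> S0" for f using that S0 sup by (auto simp: is_sup_E_def)
      fix u assume uE: "u \<in> Esp M" and ub: "\<forall>f\<in>S0. ale M f u"
      have "ale M g u" if g: "g \<in> S" for g
      proof -
        have a: "AE t in M. t \<in> \<Union>CC \<longrightarrow> g t \<le> u t"
          using G(3) g ub by (auto simp: S0_def ale_def)
        have b: "AE t in M. g t \<le> s t" using sup g by (auto simp: is_sup_E_def ale_def)
        have c: "AE t in M. f1 t \<le> u t" using ub by (auto simp: S0_def ale_def)
        show ?thesis unfolding ale_def using a b c As(3) Af(3)
        proof eventually_elim
          case (elim t)
          show ?case
          proof (cases "t \<in> \<Union>CC")
            case True thus ?thesis using elim by blast
          next
            case False
            hence "s t = 0" "f1 t = 0" using elim by (auto simp: CC_def)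
            thus ?thesis using elim by linarith
          qed
        qed
      qed
      thus "ale M s u" using sup uE by (auto simp: is_sup_E_def)
    qed
    thus ?thesis using S0 by blast
  qed
qed



lemma ess_inf_fin:
  fixes D :: "('a \<Rightarrow> real) set"
  assumes Dm: "D \<subseteq> borel_measurable M" and B: "B \<in> sets M" "emeasure M B < \<infinity>"
  shows "\<exists>D0\<subseteq>D. countable D0 \<and> (\<forall>g\<in>D. \<forall>z. (\<forall>f\<in>D0. AE t in M. z t \<le> f t) \<longrightarrow>
            (AE t in M. t \<in> B \<longrightarrow> z t \<le> g t))"
proof -
  have Fm: "(\<lambda>d t. - d t) ` D \<subseteq> borel_measurable M" using Dm by auto
  obtain F0 where F0: "F0 \<subseteq> (\<lambda>d t. - d t) ` D" "countable F0"
    "\<forall>g\<in>(\<lambda>d t. - d t) ` D. \<forall>u. (\<forall>f\<in>F0. AE t in M. f t \<le> u t) \<longrightarrow> (AE t in M. t \<in> B \<longrightarrow> g t \<le> u t)"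
    using ess_sup_fin[OF Fm B] by blast
  obtain D0 where D0: "countable D0" "D0 \<subseteq> D" "F0 = (\<lambda>d t. - d t) ` D0"
    using F0(1,2) countable_subset_image[of F0 "\<lambda>d t. - d t" D] by blast
  have "\<forall>g\<in>D. \<forall>z. (\<forall>f\<in>D0. AE t in M. z t \<le> f t) \<longrightarrow> (AE t in M. t \<in> B \<longrightarrow> z t \<le> g t)"
  proof (intro ballI allI impI)
    fix g z assume g: "g \<in> D" and z: "\<forall>f\<in>D0. AE t in M. z t \<le> f t"
    have h: "\<forall>f\<in>F0. AE t in M. f t \<le> - z t" using z D0(3) by auto
    have gi: "(\<lambda>t. - g t) \<in> (\<lambda>d t. - d t) ` D" using g by blast
    have "\<forall>u. (\<forall>f\<in>F0. AE t in M. f t \<le> u t) \<longrightarrow> (AE t in M. t \<in> B \<longrightarrow> - g t \<le> u t)"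
      using bspec[OF F0(3) gi] by simp
    from spec[OF this, of "\<lambda>t. - z t"] h have "AE t in M. t \<in> B \<longrightarrow> - g t \<le> - z t" by simp
    thus "AE t in M. t \<in> B \<longrightarrow> z t \<le> g t" by eventually_elim auto
  qed
  thus ?thesis using D0 by blast
qed

lemma ale_trans:
  fixes f g h :: "'a \<Rightarrow> real"
  assumes "ale M f g" "ale M g h" shows "ale M f h"
  using assms unfolding ale_def by eventually_elim auto

lemma dir_small:
  fixes D :: "('a \<Rightarrow> real) set"
  assumes D: "dir_inf_zero M D" and B: "B \<in> sets M" "emeasure M B < \<infinity>" and e: "e > 0" and dl: "\<delta> > 0"
  shows "\<exists>d\<in>D. measure M {t\<in>B. e \<le> d t} < \<delta>"
proof -
  have DE: "D \<subseteq> Esp M" and Dne: "D \<noteq> {}"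
    and dir: "\<And>d1 d2. d1 \<in> D \<Longrightarrow> d2 \<in> D \<Longrightarrow> \<exists>d3\<in>D. ale M d3 d1 \<and> ale M d3 d2"
    and pos: "\<And>d. d \<in> D \<Longrightarrow> ale M (\<lambda>t. 0) d"
    and inf0: "\<And>z. z \<in> Esp M \<Longrightarrow> (\<forall>d\<in>D. ale M z d) \<Longrightarrow> ale M z (\<lambda>t. 0)"
    using D unfolding dir_inf_zero_def by blast+
  have Dm: "D \<subseteq> borel_measurable M" using DE by (auto simp: Esp_def)
  obtain D0 where D0: "D0 \<subseteq> D" "countable D0"
    "\<forall>g\<in>D. \<forall>z. (\<forall>f\<in>D0. AE t in M. z t \<le> f t) \<longrightarrow> (AE t in M. t \<in> B \<longrightarrow> z t \<le> g t)"
    using ess_inf_fin[OF Dm B] by blast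
  obtain d0 where d0: "d0 \<in> D" using Dne by blast
  define D1 where "D1 = insert d0 D0"
  have D1: "D1 \<subseteq> D" "countable D1" "D1 \<noteq> {}" using D0 d0 by (auto simp: D1_def)
  define dd where "dd = from_nat_into D1"
  have dd: "range dd = D1" using D1 by (simp add: dd_def)
  have ddD: "dd n \<in> D" for n using dd D1 by auto
  note ddm[measurable] = subsetD[OF Dm ddD]
  define nxt where "nxt n d = (SOME d3. d3 \<in> D \<and> ale M d3 d \<and> ale M d3 (dd (Suc n)))" for n d
  have nxt: "d \<in> D \<Longrightarrow> nxt n d \<in> D \<and> ale M (nxt n d) d \<and> ale M (nxt n d) (dd (Suc n))" for n d
  proof -
    assume d: "d \<in> D"
    show ?thesis unfolding nxt_def
      by (rule someI_ex[of "\<lambda>d3. d3 \<in> D \<and> ale M d3 d \<and> ale M d3 (dd (Suc n))"]) (use dir[OF d ddD] in blast)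
  qed
  define ee where "ee = rec_nat (dd 0) nxt"
  have ee0: "ee 0 = dd 0" and eeS: "ee (Suc n) = nxt n (ee n)" for n by (simp_all add: ee_def)
  have eeD: "ee n \<in> D \<and> (\<forall>k\<le>n. ale M (ee n) (dd k))" for n
  proof (induction n)
    case 0 thus ?case using ddD by (auto simp: ee0 ale_def)
  next
    case (Suc n)
    have 1: "ee (Suc n) \<in> D" "ale M (ee (Suc n)) (ee n)" "ale M (ee (Suc n)) (dd (Suc n))"
      using nxt[of "ee n" n] Suc by (auto simp: eeS)
    have "ale M (ee (Suc n)) (dd k)" if "k \<le> Suc n" for k
    proof (cases "k = Suc n")
      case True thus ?thesis using 1 by simp
    next
      case False hence "k \<le> n" using that by simp
      thus ?thesis using Suc 1 ale_trans by blast
    qed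
    thus ?case using 1 by blast
  qed
  define N where "N = {t\<in>B. \<forall>k. e \<le> dd k t}"
  have Nm: "N \<in> sets M" unfolding N_def by (rule sets_restr[OF B(1)]) measurable
  define z where "z t = e * indicator N t" for t
  have zm: "z \<in> borel_measurable M" unfolding z_def using Nm by measurable
  have zE: "z \<in> Esp M" by (rule Esp_fin_support[OF zm B]) (auto simp: z_def N_def)
  have z1: "AE t in M. z t \<le> f t" if "f \<in> D1" for f
  proof -
    from that dd have "f \<in> range dd" by simp
    then obtain k where k: "f = dd k" by blast
    have "AE t in M. 0 \<le> f t" using pos[of f] that D1 by (auto simp: ale_def)
    thus ?thesis by eventually_elim (auto simp: z_def N_def k indicator_def)
  qed
  have "ale M z d" if d: "d \<in> D" for d
  proof -
    have "AE t in M. t \<in> B \<longrightarrow> z t \<le> d t" using D0(3) d z1 by (auto simp: D1_def)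
    moreover have "AE t in M. 0 \<le> d t" using pos[OF d] by (auto simp: ale_def)
    ultimately show ?thesis unfolding ale_def
      by eventually_elim (auto simp: z_def N_def indicator_def)
  qed
  hence "ale M z (\<lambda>t. 0)" using inf0[OF zE] by blast
  hence "AE t in M. t \<notin> N" unfolding ale_def by eventually_elim (use e in \<open>auto simp: z_def\<close>)
  hence N0: "measure M N = 0" by (intro AE_null[OF Nm B]) (auto simp: N_def)
  define En where "En n = {t\<in>B. \<forall>k\<le>n. e \<le> dd k t}" for n
  have Enm: "En n \<in> sets M" for n unfolding En_def by (rule sets_restr[OF B(1)]) measurable
  have dec: "decseq En" unfolding decseq_def En_def by auto
  have fin: "emeasure M (En n) \<noteq> \<infinity>" for n using fin_sub[OF B, of "En n"] by (auto simp: En_def)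
  have I: "(\<Inter>n. En n) = N"
  proof
    show "(\<Inter>n. En n) \<subseteq> N"
    proof
      fix t assume "t \<in> (\<Inter>n. En n)"
      hence "t \<in> En k" for k by blast
      hence "t \<in> B" "e \<le> dd k t" for k unfolding En_def by auto
      thus "t \<in> N" unfolding N_def by auto
    qed
    show "N \<subseteq> (\<Inter>n. En n)" unfolding N_def En_def by auto
  qed
  have "(\<lambda>n. measure M (En n)) \<longlonglongrightarrow> 0" using Lim_measure_decseq[of En M, OF _ dec fin] Enm unfolding I N0 by blast
  from order_tendstoD(2)[OF this dl] obtain n where n: "measure M (En n) < \<delta>"
    by (auto simp: eventually_sequentially)
  have "\<forall>k\<in>{..n}. AE t in M. ee n t \<le> dd k t" using eeD[of n] by (auto simp: ale_def)
  hence AEk: "AE t in M. \<forall>k\<in>{..n}. ee n t \<le> dd k t"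
    by (simp only: AE_ball_countable[OF countable_finite[OF finite_atMost]])
  have sub: "AE t in M. t \<in> {t\<in>B. e \<le> ee n t} \<longrightarrow> t \<in> En n"
    using AEk
  proof eventually_elim
    case (elim t)
    show ?case
    proof
      assume t: "t \<in> {t\<in>B. e \<le> ee n t}"
      have "e \<le> dd k t" if "k \<le> n" for k
      proof -
        have "ee n t \<le> dd k t" using elim that by simp
        moreover have "e \<le> ee n t" using t by simp
        ultimately show ?thesis by linarith
      qed
      thus "t \<in> En n" using t by (simp add: En_def)
    qed
  qed
  have [measurable]: "ee n \<in> borel_measurable M" using eeD[of n] Dm by auto
  have s1: "{t\<in>B. e \<le> ee n t} \<in> sets M" by (rule sets_restr[OF B(1)]) measurable
  have EnB: "En n \<subseteq> B" by (auto simp: En_def)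
  have "measure M {t\<in>B. e \<le> ee n t} \<le> measure M (En n)"
    by (rule meas_mono_AE[OF B s1 Enm EnB sub])
  hence "measure M {t\<in>B. e \<le> ee n t} < \<delta>" using n by linarith
  thus ?thesis using eeD[of n] by blast
qed

lemma uo_lm:
  fixes x :: "'i \<Rightarrow> 'a \<Rightarrow> real"
  assumes x: "\<forall>\<alpha>\<in>A. x \<alpha> \<in> Esp M" and f: "f \<in> Esp M" and uo: "uo_conv M A le x f"
  shows "lm_conv M A le x f"
  unfolding lm_conv_def
proof (intro allI impI ballI)
  fix \<epsilon> \<delta> :: real and B assume eps: "\<epsilon> > 0" and B: "B \<in> sets M" and Bf: "emeasure M B < \<infinity>" and dl: "\<delta> > 0"
  define u where "u t = (indicator B t :: real)" for t
  have um: "u \<in> borel_measurable M" unfolding u_def using B by measurable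
  have uE: "u \<in> Esp M" by (rule Esp_fin_support[OF um B Bf]) (auto simp: u_def)
  obtain D where D: "dir_inf_zero M D"
    and Dc: "\<forall>d\<in>D. net_ev A le (\<lambda>\<alpha>. ale M (\<lambda>t. \<bar>min \<bar>x \<alpha> t - f t\<bar> \<bar>u t\<bar> - 0\<bar>) d)"
    using uo uE unfolding uo_conv_def order_conv_def by blast
  have e': "min \<epsilon> 1 > 0" using eps by simp
  obtain d where d: "d \<in> D" "measure M {t\<in>B. min \<epsilon> 1 \<le> d t} < \<delta>"
    using dir_small[OF D B Bf e' dl] by blast
  have dm[measurable]: "d \<in> borel_measurable M" using D d by (auto simp: dir_inf_zero_def Esp_def)
  note fm[measurable] = Esp_meas[OF f]
  show "net_ev A le (\<lambda>\<alpha>. measure M {t\<in>B. \<epsilon> \<le> \<bar>x \<alpha> t - f t\<bar>} < \<delta>)"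
  proof (rule net_ev_mono[OF Dc[rule_format, OF d(1)]])
    fix a assume a: "a \<in> A" and ad: "ale M (\<lambda>t. \<bar>min \<bar>x a t - f t\<bar> \<bar>u t\<bar> - 0\<bar>) d"
    have [measurable]: "x a \<in> borel_measurable M" using x a by (auto simp: Esp_def)
    have "measure M {t\<in>B. \<epsilon> \<le> \<bar>x a t - f t\<bar>} \<le> measure M {t\<in>B. min \<epsilon> 1 \<le> d t}"
    proof (rule meas_mono_AE[OF B Bf])
      show "AE t in M. t \<in> {t\<in>B. \<epsilon> \<le> \<bar>x a t - f t\<bar>} \<longrightarrow> t \<in> {t\<in>B. min \<epsilon> 1 \<le> d t}"
        using ad unfolding ale_def
      proof eventually_elim
        case (elim t)
        show ?case
        proof
          assume t: "t \<in> {t\<in>B. \<epsilon> \<le> \<bar>x a t - f t\<bar>}"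
          hence "u t = 1" by (simp add: u_def)
          hence "min \<epsilon> 1 \<le> \<bar>min \<bar>x a t - f t\<bar> \<bar>u t\<bar> - 0\<bar>" using t by auto
          thus "t \<in> {t\<in>B. min \<epsilon> 1 \<le> d t}" using elim t by auto
        qed
      qed
      show "{t\<in>B. \<epsilon> \<le> \<bar>x a t - f t\<bar>} \<in> sets M" by (rule dset_sets[OF B]) measurable
      show "{t\<in>B. min \<epsilon> 1 \<le> d t} \<in> sets M" by (rule sets_restr[OF B]) measurable
    qed auto
    thus "measure M {t\<in>B. \<epsilon> \<le> \<bar>x a t - f t\<bar>} < \<delta>" using d by simp
  qed
qed



lemma AE_lm:
  fixes y :: "nat \<Rightarrow> 'a \<Rightarrow> real"
  assumes ym: "\<And>n. y n \<in> borel_measurable M" and gm: "g \<in> borel_measurable M"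
    and conv: "AE t in M. (\<lambda>n. y n t) \<longlonglongrightarrow> g t"
  shows "lm_conv M UNIV (\<le>) y g"
  unfolding lm_conv_def
proof (intro allI impI ballI)
  fix \<epsilon> \<delta> :: real and B assume eps: "\<epsilon> > 0" and B: "B \<in> sets M" and Bf: "emeasure M B < \<infinity>" and dl: "\<delta> > 0"
  note [measurable] = ym gm
  define G where "G n = {t\<in>B. \<exists>k\<ge>n. \<epsilon> \<le> \<bar>y k t - g t\<bar>}" for n
  have Gm: "G n \<in> sets M" for n unfolding G_def by (rule sets_restr[OF B]) measurable
  have dec: "decseq G" unfolding decseq_def
  proof (intro allI impI subsetI)
    fix m n t assume mn: "m \<le> n" and t: "t \<in> G n"
    then obtain k where k: "k \<ge> n" "t \<in> B" "\<epsilon> \<le> \<bar>y k t - g t\<bar>" unfolding G_def by blast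
    have "k \<ge> m" using k mn by simp
    thus "t \<in> G m" using k unfolding G_def by blast
  qed
  have fin: "emeasure M (G n) \<noteq> \<infinity>" for n using fin_sub[OF B Bf, of "G n"] by (auto simp: G_def)
  have AEn: "AE t in M. t \<notin> (\<Inter>n. G n)" using conv
  proof eventually_elim
    case (elim t)
    obtain N where N: "\<forall>n\<ge>N. norm (y n t - g t) < \<epsilon>" using LIMSEQ_D[OF elim eps] by blast
    hence "\<not> \<epsilon> \<le> \<bar>y k t - g t\<bar>" if "k \<ge> N" for k using that by fastforce
    hence "t \<notin> G N" unfolding G_def by blast
    thus ?case by blast
  qed
  have I0: "measure M (\<Inter>n. G n) = 0"
  proof (rule AE_null[OF _ B Bf _ AEn])
    show "(\<Inter>n. G n) \<in> sets M" using Gm by (intro sets.countable_INT) auto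
    show "(\<Inter>n. G n) \<subseteq> B" unfolding G_def by blast
  qed
  have "(\<lambda>n. measure M (G n)) \<longlonglongrightarrow> 0" using Lim_measure_decseq[of G M, OF _ dec fin] Gm unfolding I0 by blast
  from order_tendstoD(2)[OF this dl] obtain N where N: "\<And>n. n \<ge> N \<Longrightarrow> measure M (G n) < \<delta>"
    by (auto simp: eventually_sequentially)
  have "\<forall>b. N \<le> b \<longrightarrow> measure M {t\<in>B. \<epsilon> \<le> \<bar>y b t - g t\<bar>} < \<delta>"
  proof (intro allI impI)
    fix b assume b: "N \<le> b"
    have "measure M {t\<in>B. \<epsilon> \<le> \<bar>y b t - g t\<bar>} \<le> measure M (G b)"
    proof (rule meas_mono[OF B Bf])
      show "{t\<in>B. \<epsilon> \<le> \<bar>y b t - g t\<bar>} \<in> sets M" by (rule dset_sets[OF B]) measurable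
      show "{t\<in>B. \<epsilon> \<le> \<bar>y b t - g t\<bar>} \<subseteq> G b" unfolding G_def by blast
      show "G b \<subseteq> B" unfolding G_def by blast
    qed (rule Gm)
    thus "measure M {t\<in>B. \<epsilon> \<le> \<bar>y b t - g t\<bar>} < \<delta>" using N[OF b] by linarith
  qed
  thus "net_ev UNIV (\<le>) (\<lambda>\<alpha>. measure M {t\<in>B. \<epsilon> \<le> \<bar>y \<alpha> t - g t\<bar>} < \<delta>)"
    unfolding net_ev_def by blast
qed

lemma fin_UN_finite:
  assumes "finite I" "\<And>i. i \<in> I \<Longrightarrow> A i \<in> sets M \<and> emeasure M (A i) < \<infinity>"
  shows "(\<Union>i\<in>I. A i) \<in> sets M \<and> emeasure M (\<Union>i\<in>I. A i) < \<infinity>"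
  using assms
proof (induction I rule: finite_induct)
  case empty thus ?case by simp
next
  case (insert i I)
  have 1: "A i \<in> sets M" "emeasure M (A i) < \<infinity>" using insert by auto
  have 2: "(\<Union>i\<in>I. A i) \<in> sets M" "emeasure M (\<Union>i\<in>I. A i) < \<infinity>" using insert by auto
  show ?case using fin_Un[OF 1(1) 2(1) 1(2) 2(2)] 1 2 by auto
qed

lemma embedded:
  fixes x :: "'i \<Rightarrow> 'a \<Rightarrow> real" and f :: "'a \<Rightarrow> real"
  assumes dir: "directed_set A le" and x: "\<forall>\<alpha>\<in>A. x \<alpha> \<in> Esp M" and f: "f \<in> Esp M"
    and L: "lm_conv M A le x f"
  shows "\<exists>\<alpha>. embedded_seq A le \<alpha> \<and> (AE t in M. (\<lambda>n. x (\<alpha> n) t) \<longlonglongrightarrow> f t) \<and>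
           lm_conv M UNIV (\<le>) (\<lambda>n. x (\<alpha> n)) f"
proof -
  have Ane: "A \<noteq> {}" using dir unfolding directed_set_def by blast
  have trans: "\<And>a b c. a \<in> A \<Longrightarrow> b \<in> A \<Longrightarrow> c \<in> A \<Longrightarrow> le a b \<Longrightarrow> le b c \<Longrightarrow> le a c"
    using dir unfolding directed_set_def by blast
  have ub: "\<And>a b. a \<in> A \<Longrightarrow> b \<in> A \<Longrightarrow> \<exists>c\<in>A. le a c \<and> le b c"
    using dir unfolding directed_set_def by blast
  define NL where "NL = (\<not> (\<exists>a\<in>A. \<forall>b\<in>A. le b a))"
  have choose: "\<exists>a'. a' \<in> A \<and> le a a' \<and> measure M {t\<in>C. \<epsilon> \<le> \<bar>x a' t - f t\<bar>} < \<epsilon> \<and> (NL \<longrightarrow> \<not> le a' a)"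
    if a: "a \<in> A" and C: "C \<in> sets M" "emeasure M C < \<infinity>" and e: "\<epsilon> > 0" for a C \<epsilon>
  proof -
    have "net_ev A le (\<lambda>\<alpha>. measure M {t\<in>C. \<epsilon> \<le> \<bar>x \<alpha> t - f t\<bar>} < \<epsilon>)"
      using L C e unfolding lm_conv_def by blast
    then obtain a1 where a1: "a1 \<in> A" "\<And>b. b \<in> A \<Longrightarrow> le a1 b \<Longrightarrow> measure M {t\<in>C. \<epsilon> \<le> \<bar>x b t - f t\<bar>} < \<epsilon>"
      unfolding net_ev_def by blast
    obtain b where b: "b \<in> A" "NL \<longrightarrow> \<not> le b a"
    proof (cases NL)
      case True
      then obtain b where "b \<in> A" "\<not> le b a" using a unfolding NL_def by blast
      thus ?thesis using that by blast
    next
      case False thus ?thesis using that a by blast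
    qed
    obtain c where c: "c \<in> A" "le a1 c" "le a c" using ub[OF a1(1) a] by blast
    obtain c' where c': "c' \<in> A" "le c c'" "le b c'" using ub[OF c(1) b(1)] by blast
    have 1: "le a c'" using trans[OF a c(1) c'(1) c(3) c'(2)] .
    have 2: "le a1 c'" using trans[OF a1(1) c(1) c'(1) c(2) c'(2)] .
    have 3: "NL \<longrightarrow> \<not> le c' a" using trans[OF b(1) c'(1) a c'(3)] b(2) by blast
    show ?thesis using c'(1) a1(2)[OF c'(1) 2] 1 3 by blast
  qed
  define G where "G a C \<epsilon> = (SOME a'. a' \<in> A \<and> le a a' \<and> measure M {t\<in>C. \<epsilon> \<le> \<bar>x a' t - f t\<bar>} < \<epsilon> \<and> (NL \<longrightarrow> \<not> le a' a))" for a C \<epsilon>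
  have G: "G a C \<epsilon> \<in> A \<and> le a (G a C \<epsilon>) \<and> measure M {t\<in>C. \<epsilon> \<le> \<bar>x (G a C \<epsilon>) t - f t\<bar>} < \<epsilon> \<and> (NL \<longrightarrow> \<not> le (G a C \<epsilon>) a)"
    if "a \<in> A" "C \<in> sets M" "emeasure M C < \<infinity>" "\<epsilon> > 0" for a C \<epsilon>
    unfolding G_def
    by (rule someI_ex[of "\<lambda>a'. a' \<in> A \<and> le a a' \<and> measure M {t\<in>C. \<epsilon> \<le> \<bar>x a' t - f t\<bar>} < \<epsilon> \<and> (NL \<longrightarrow> \<not> le a' a)"])
      (rule choose[OF that])
  define sp where "sp h = (SOME S :: nat \<Rightarrow> 'a set. (\<forall>n. S n \<in> sets M \<and> emeasure M (S n) < \<infinity>) \<and>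
      (AE t in M. h t \<noteq> 0 \<longrightarrow> t \<in> (\<Union>n. S n)))" for h :: "'a \<Rightarrow> real"
  have sp: "(\<forall>n. sp h n \<in> sets M \<and> emeasure M (sp h n) < \<infinity>) \<and> (AE t in M. h t \<noteq> 0 \<longrightarrow> t \<in> (\<Union>n. sp h n))"
    if "h \<in> Esp M" for h
  proof -
    have "sigma_finite_support M h" using that by (simp add: Esp_def)
    thus ?thesis unfolding sp_def sigma_finite_support_def by (rule someI_ex)
  qed
  define Bs where "Bs H n = (\<Union>p\<in>H \<times> {..n}. sp (fst p) (snd p))" for H n
  have Bs_iff: "t \<in> Bs H n \<longleftrightarrow> (\<exists>h\<in>H. \<exists>j\<le>n. t \<in> sp h j)" for t H n
    unfolding Bs_def by auto
  have Bs: "Bs H n \<in> sets M \<and> emeasure M (Bs H n) < \<infinity>" if "finite H" "H \<subseteq> Esp M" for H n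
    unfolding Bs_def by (rule fin_UN_finite) (use that sp in auto)
  have Bs_mono: "Bs H m \<subseteq> Bs H' n" if "H \<subseteq> H'" "m \<le> n" for H H' m n
    using that unfolding Bs_iff by (meson Bs_iff order_trans subsetD subsetI)
  define ep where "ep n = (1/2::real)^n" for n
  have ep: "ep n > 0" for n by (simp add: ep_def)
  obtain a00 where a00: "a00 \<in> A" using Ane by blast
  define step where "step n p = (G (fst p) (Bs (insert (x (fst p)) (snd p)) (Suc n)) (ep (Suc n)),
      insert (x (fst p)) (snd p))" for n and p :: "'i \<times> ('a \<Rightarrow> real) set"
  define st where "st = rec_nat (G a00 (Bs {f} 0) (ep 0), {f}) step"
  define \<alpha> where "\<alpha> n = fst (st n)" for n
  define H where "H n = snd (st n)" for n
  have st0: "\<alpha> 0 = G a00 (Bs {f} 0) (ep 0)" "H 0 = {f}" by (simp_all add: \<alpha>_def H_def st_def)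
  have stS: "H (Suc n) = insert (x (\<alpha> n)) (H n)" "\<alpha> (Suc n) = G (\<alpha> n) (Bs (H (Suc n)) (Suc n)) (ep (Suc n))" for n
    by (simp_all add: \<alpha>_def H_def st_def step_def)
  have inv: "\<alpha> n \<in> A \<and> finite (H n) \<and> H n \<subseteq> Esp M \<and> f \<in> H n \<and>
      measure M {t\<in>Bs (H n) n. ep n \<le> \<bar>x (\<alpha> n) t - f t\<bar>} < ep n" for n
  proof (induction n)
    case 0
    have "Bs {f} 0 \<in> sets M \<and> emeasure M (Bs {f} 0) < \<infinity>" using Bs[of "{f}"] f by auto
    hence "G a00 (Bs {f} 0) (ep 0) \<in> A \<and> measure M {t\<in>Bs {f} 0. ep 0 \<le> \<bar>x (G a00 (Bs {f} 0) (ep 0)) t - f t\<bar>} < ep 0"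
      using G[OF a00 _ _ ep] by blast
    thus ?case using f by (simp add: st0)
  next
    case (Suc n)
    have HS: "finite (H (Suc n))" "H (Suc n) \<subseteq> Esp M" "f \<in> H (Suc n)" using Suc x by (auto simp: stS(1))
    have "Bs (H (Suc n)) (Suc n) \<in> sets M \<and> emeasure M (Bs (H (Suc n)) (Suc n)) < \<infinity>" using Bs[OF HS(1,2)] .
    hence "\<alpha> (Suc n) \<in> A \<and> measure M {t\<in>Bs (H (Suc n)) (Suc n). ep (Suc n) \<le> \<bar>x (\<alpha> (Suc n)) t - f t\<bar>} < ep (Suc n)"
      unfolding stS(2)[of n] using G[of "\<alpha> n" _ "ep (Suc n)"] Suc ep by blast
    thus ?case using HS by blast
  qed
  have stepP: "le (\<alpha> n) (\<alpha> (Suc n)) \<and> (NL \<longrightarrow> \<not> le (\<alpha> (Suc n)) (\<alpha> n))" for n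
  proof -
    have HS: "finite (H (Suc n))" "H (Suc n) \<subseteq> Esp M" using inv[of "Suc n"] by blast+
    show ?thesis unfolding stS(2)[of n] using G[OF _ _ _ ep, of "\<alpha> n" "Bs (H (Suc n)) (Suc n)"] Bs[OF HS] inv[of n] by blast
  qed
  have Hmono: "H m \<subseteq> H n" if "m \<le> n" for m n
    by (rule lift_Suc_mono_le[of H, OF _ that]) (auto simp: stS(1))
  have emb: "embedded_seq A le \<alpha>" unfolding embedded_seq_def using inv stepP unfolding NL_def by blast
  have xm[measurable]: "x (\<alpha> n) \<in> borel_measurable M" for n using inv[of n] x by (auto simp: Esp_def)
  have fm[measurable]: "f \<in> borel_measurable M" using f by (simp add: Esp_def)
  define E where "E n = {t\<in>Bs (H n) n. ep n \<le> \<bar>x (\<alpha> n) t - f t\<bar>}" for n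
  have BsH: "Bs (H n) n \<in> sets M" "emeasure M (Bs (H n) n) < \<infinity>" for n using Bs[of "H n" n] inv[of n] by auto
  have Em: "E n \<in> sets M" for n unfolding E_def by (rule dset_sets[OF BsH(1)]) measurable
  have Efin: "emeasure M (E n) < \<infinity>" for n using fin_sub[OF BsH, of "E n"] by (auto simp: E_def)
  have summ: "summable (\<lambda>n. measure M (E n))"
  proof (rule summable_comparison_test[where g=ep])
    show "\<exists>N. \<forall>n\<ge>N. norm (measure M (E n)) \<le> ep n" using inv by (auto simp: E_def less_imp_le)
    show "summable ep" unfolding ep_def by (rule summable_geometric) simp
  qed
  have BC: "AE t in M. eventually (\<lambda>n. t \<in> space M - E n) sequentially"
    by (rule borel_cantelli_AE1[OF Em Efin summ])
  have AEf: "AE t in M. f t \<noteq> 0 \<longrightarrow> t \<in> (\<Union>j. sp f j)" using sp[OF f] by blast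
  have "\<forall>m. AE t in M. x (\<alpha> m) t \<noteq> 0 \<longrightarrow> t \<in> (\<Union>j. sp (x (\<alpha> m)) j)"
    using sp inv x by blast
  hence AEx: "AE t in M. \<forall>m. x (\<alpha> m) t \<noteq> 0 \<longrightarrow> t \<in> (\<Union>j. sp (x (\<alpha> m)) j)"
    by (rule AE_all_countable[THEN iffD2])
  have lim_ep: "ep \<longlonglongrightarrow> 0" unfolding ep_def by (rule LIMSEQ_realpow_zero) auto
  have conv: "AE t in M. (\<lambda>n. x (\<alpha> n) t) \<longlonglongrightarrow> f t" using BC AEf AEx
  proof eventually_elim
    case (elim t)
    show ?case
    proof (cases "\<exists>N. t \<in> Bs (H N) N")
      case True
      then obtain N where N: "t \<in> Bs (H N) N" by blast
      have ev1: "eventually (\<lambda>n. t \<in> Bs (H n) n) sequentially"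
        unfolding eventually_sequentially using N Bs_mono Hmono by blast
      have "eventually (\<lambda>n. norm (x (\<alpha> n) t - f t) \<le> ep n) sequentially"
        using ev1 elim(1)
      proof eventually_elim
        case (elim n)
        thus ?case by (auto simp: E_def)
      qed
      hence "(\<lambda>n. x (\<alpha> n) t - f t) \<longlonglongrightarrow> 0" using lim_ep by (rule Lim_null_comparison)
      thus ?thesis by (rule LIM_zero_cancel)
    next
      case False
      have f0: "f t = 0"
      proof (rule ccontr)
        assume "f t \<noteq> 0"
        then obtain j where "t \<in> sp f j" using elim(2) by blast
        hence "t \<in> Bs (H j) j" unfolding Bs_iff using inv[of j] by blast
        thus False using False by blast
      qed
      have x0: "x (\<alpha> m) t = 0" for m
      proof (rule ccontr)
        assume "x (\<alpha> m) t \<noteq> 0"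
        then obtain j where j: "t \<in> sp (x (\<alpha> m)) j" using elim(3) by blast
        have "x (\<alpha> m) \<in> H (max (Suc m) j)" using Hmono[of "Suc m" "max (Suc m) j"] stS(1)[of m] by auto
        hence "t \<in> Bs (H (max (Suc m) j)) (max (Suc m) j)" unfolding Bs_iff using j by (meson max.cobounded2)
        thus False using False by blast
      qed
      show ?thesis using f0 x0 by simp
    qed
  qed
  have lm: "lm_conv M UNIV (\<le>) (\<lambda>n. x (\<alpha> n)) f" by (rule AE_lm[OF xm fm conv])
  show ?thesis using emb conv lm by blast
qed


lemma seq_char:
  fixes x :: "nat \<Rightarrow> 'a \<Rightarrow> real"
  assumes x: "\<forall>n. x n \<in> Esp M" and f: "f \<in> Esp M"
  shows "lm_conv M UNIV (\<le>) x f \<longleftrightarrow>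
    (\<forall>r :: nat \<Rightarrow> nat. strict_mono r \<longrightarrow> (\<exists>s :: nat \<Rightarrow> nat. strict_mono s \<and>
       (AE t in M. (\<lambda>n. x (r (s n)) t) \<longlonglongrightarrow> f t)))"
proof
  assume L: "lm_conv M UNIV (\<le>) x f"
  show "\<forall>r :: nat \<Rightarrow> nat. strict_mono r \<longrightarrow> (\<exists>s :: nat \<Rightarrow> nat. strict_mono s \<and>
       (AE t in M. (\<lambda>n. x (r (s n)) t) \<longlonglongrightarrow> f t))"
  proof (intro allI impI)
    fix r :: "nat \<Rightarrow> nat" assume r: "strict_mono r"
    have Lr: "lm_conv M UNIV (\<le>) (\<lambda>n. x (r n)) f"
      unfolding lm_conv_def
    proof (intro allI impI ballI)
      fix \<epsilon> \<delta> :: real and B assume "\<epsilon> > 0" "B \<in> sets M" "emeasure M B < \<infinity>" "\<delta> > 0"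
      hence "net_ev UNIV (\<le>) (\<lambda>\<alpha>. measure M {t\<in>B. \<epsilon> \<le> \<bar>x \<alpha> t - f t\<bar>} < \<delta>)"
        using L unfolding lm_conv_def by blast
      then obtain a where a: "\<And>b. a \<le> b \<Longrightarrow> measure M {t\<in>B. \<epsilon> \<le> \<bar>x b t - f t\<bar>} < \<delta>"
        unfolding net_ev_def by blast
      have "a \<le> r b" if "a \<le> b" for b using seq_suble[OF r, of b] that by simp
      thus "net_ev UNIV (\<le>) (\<lambda>\<alpha>. measure M {t\<in>B. \<epsilon> \<le> \<bar>x (r \<alpha>) t - f t\<bar>} < \<delta>)"
        unfolding net_ev_def using a by blast
    qed
    have dir: "directed_set (UNIV :: nat set) (\<le>)"
      unfolding directed_set_def
    proof (intro conjI ballI)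
      fix a b :: nat
      show "\<exists>c\<in>UNIV. a \<le> c \<and> b \<le> c" by (intro bexI[of _ "max a b"]) auto
    qed auto
    obtain \<alpha> where \<alpha>: "embedded_seq UNIV (\<le>) \<alpha>" "AE t in M. (\<lambda>n. x (r (\<alpha> n)) t) \<longlonglongrightarrow> f t"
      using embedded[OF dir _ f Lr] x by blast
    have nolarge: "\<not> (\<exists>a\<in>(UNIV :: nat set). \<forall>b\<in>UNIV. b \<le> a)"
      by (metis UNIV_I Suc_n_not_le_n)
    have "\<alpha> n < \<alpha> (Suc n)" for n
      using \<alpha>(1) nolarge unfolding embedded_seq_def by (meson not_le)
    hence "strict_mono \<alpha>" by (simp add: strict_mono_Suc_iff)
    thus "\<exists>s :: nat \<Rightarrow> nat. strict_mono s \<and> (AE t in M. (\<lambda>n. x (r (s n)) t) \<longlonglongrightarrow> f t)"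
      using \<alpha>(2) by blast
  qed
next
  assume R: "\<forall>r :: nat \<Rightarrow> nat. strict_mono r \<longrightarrow> (\<exists>s :: nat \<Rightarrow> nat. strict_mono s \<and>
       (AE t in M. (\<lambda>n. x (r (s n)) t) \<longlonglongrightarrow> f t))"
  show "lm_conv M UNIV (\<le>) x f"
  proof (rule ccontr)
    assume "\<not> lm_conv M UNIV (\<le>) x f"
    then obtain \<epsilon> \<delta> :: real and B where e: "\<epsilon> > 0" and B: "B \<in> sets M" "emeasure M B < \<infinity>" and d: "\<delta> > 0"
      and nev: "\<not> net_ev UNIV (\<le>) (\<lambda>\<alpha>. measure M {t\<in>B. \<epsilon> \<le> \<bar>x \<alpha> t - f t\<bar>} < \<delta>)"
      unfolding lm_conv_def by blast
    define S where "S = {n. \<not> measure M {t\<in>B. \<epsilon> \<le> \<bar>x n t - f t\<bar>} < \<delta>}"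
    have "\<forall>m. \<exists>n\<ge>m. n \<in> S" using nev unfolding net_ev_def S_def by blast
    hence "infinite S" by (simp add: infinite_nat_iff_unbounded_le)
    then obtain r :: "nat \<Rightarrow> nat" where r: "strict_mono r" "\<And>n. r n \<in> S" using infinite_enumerate by blast
    obtain s where s: "strict_mono s" "AE t in M. (\<lambda>n. x (r (s n)) t) \<longlonglongrightarrow> f t" using R r(1) by blast
    have xm: "x (r (s n)) \<in> borel_measurable M" for n using x by (simp add: Esp_def)
    have fm: "f \<in> borel_measurable M" using f by (simp add: Esp_def)
    have "lm_conv M UNIV (\<le>) (\<lambda>n. x (r (s n))) f" by (rule AE_lm[OF xm fm s(2)])
    hence "net_ev UNIV (\<le>) (\<lambda>\<alpha>. measure M {t\<in>B. \<epsilon> \<le> \<bar>x (r (s \<alpha>)) t - f t\<bar>} < \<delta>)"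
      using e B d unfolding lm_conv_def by blast
    then obtain a where "measure M {t\<in>B. \<epsilon> \<le> \<bar>x (r (s a)) t - f t\<bar>} < \<delta>"
      unfolding net_ev_def by blast
    moreover have "r (s a) \<in> S" by (rule r(2))
    ultimately show False unfolding S_def by simp
  qed
qed

theorem corollary5p12:
  fixes M :: "'a measure"
  assumes "semifinite M"
  shows "solid_linear_top M (lm_topology M) \<and>
    (\<forall>(A :: 'i set) le x f. directed_set A le \<and> (\<forall>\<alpha>\<in>A. x \<alpha> \<in> Esp M) \<and> f \<in> Esp M \<and>
        uo_conv M A le x f \<longrightarrow> net_limitin (lm_topology M) A le x f) \<and>
    (\<forall>(A :: 'i set) le x f. directed_set A le \<and> (\<forall>\<alpha>\<in>A. x \<alpha> \<in> Esp M) \<and> f \<in> Esp M \<longrightarrow>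
        (net_limitin (lm_topology M) A le x f \<longleftrightarrow> lm_conv M A le x f)) \<and>
    countable_sup_property M \<and>
    (\<forall>(A :: 'i set) le x f. directed_set A le \<and> (\<forall>\<alpha>\<in>A. x \<alpha> \<in> Esp M) \<and> f \<in> Esp M \<and>
        lm_conv M A le x f \<longrightarrow>
        (\<exists>\<alpha>. embedded_seq A le \<alpha> \<and>
           (AE t in M. (\<lambda>n. x (\<alpha> n) t) \<longlonglongrightarrow> f t) \<and>
           lm_conv M UNIV (\<le>) (\<lambda>n. x (\<alpha> n)) f)) \<and>
    (\<forall>(x :: nat \<Rightarrow> 'a \<Rightarrow> real) f. (\<forall>n. x n \<in> Esp M) \<and> f \<in> Esp M \<longrightarrow>
        (lm_conv M UNIV (\<le>) x f \<longleftrightarrow>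
         (\<forall>r :: nat \<Rightarrow> nat. strict_mono r \<longrightarrow> (\<exists>s :: nat \<Rightarrow> nat. strict_mono s \<and>
            (AE t in M. (\<lambda>n. x (r (s n)) t) \<longlonglongrightarrow> f t)))))"
proof (intro conjI)
  show "solid_linear_top M (lm_topology M)" by (rule slt)
  show "\<forall>(A :: 'i set) le x f. directed_set A le \<and> (\<forall>\<alpha>\<in>A. x \<alpha> \<in> Esp M) \<and> f \<in> Esp M \<and>
        uo_conv M A le x f \<longrightarrow> net_limitin (lm_topology M) A le x f"
  proof (intro allI impI, elim conjE)
    fix A :: "'i set" and le x f
    assume x: "\<forall>\<alpha>\<in>A. x \<alpha> \<in> Esp M" and f: "f \<in> Esp M" and uo: "uo_conv M A le x f"
    show "net_limitin (lm_topology M) A le x f"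
      using limitin_iff_lm[OF x f] uo_lm[OF x f uo] by blast
  qed
  show "\<forall>(A :: 'i set) le x f. directed_set A le \<and> (\<forall>\<alpha>\<in>A. x \<alpha> \<in> Esp M) \<and> f \<in> Esp M \<longrightarrow>
        (net_limitin (lm_topology M) A le x f \<longleftrightarrow> lm_conv M A le x f)"
    using limitin_iff_lm by blast
  show "countable_sup_property M" by (rule csp)
  show "\<forall>(A :: 'i set) le x f. directed_set A le \<and> (\<forall>\<alpha>\<in>A. x \<alpha> \<in> Esp M) \<and> f \<in> Esp M \<and>
        lm_conv M A le x f \<longrightarrow>
        (\<exists>\<alpha>. embedded_seq A le \<alpha> \<and>
           (AE t in M. (\<lambda>n. x (\<alpha> n) t) \<longlonglongrightarrow> f t) \<and>
           lm_conv M UNIV (\<le>) (\<lambda>n. x (\<alpha> n)) f)"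
  proof (intro allI impI, elim conjE)
    fix A :: "'i set" and le x f
    assume d: "directed_set A le" and x: "\<forall>\<alpha>\<in>A. x \<alpha> \<in> Esp M" and f: "f \<in> Esp M" and L: "lm_conv M A le x f"
    show "\<exists>\<alpha>. embedded_seq A le \<alpha> \<and> (AE t in M. (\<lambda>n. x (\<alpha> n) t) \<longlonglongrightarrow> f t) \<and>
           lm_conv M UNIV (\<le>) (\<lambda>n. x (\<alpha> n)) f"
      by (rule embedded[OF d x f L])
  qed
  show "\<forall>(x :: nat \<Rightarrow> 'a \<Rightarrow> real) f. (\<forall>n. x n \<in> Esp M) \<and> f \<in> Esp M \<longrightarrow>
        (lm_conv M UNIV (\<le>) x f \<longleftrightarrow>
         (\<forall>r :: nat \<Rightarrow> nat. strict_mono r \<longrightarrow> (\<exists>s :: nat \<Rightarrow> nat. strict_mono s \<and>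
            (AE t in M. (\<lambda>n. x (r (s n)) t) \<longlonglongrightarrow> f t))))"
    using seq_char by blast
qed

end
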